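(* Let $X$ be a smooth toric variety with fan $\Sigma$, let $\sigma\in\Sigma$ be a $2$-dimensional cone with $\sigma(1)=\{\rho_1,\rho_2\}$, and let $X'$ be the toric variety of the star subdivision $\Sigma'$ of $\Sigma$ relative to $\sigma$ (the blow-up of $X$ along $\overline{O_\sigma}$), with $E$ the $T$-invariant prime divisor of the new ray generated by $v_\sigma=v_{\rho_1}+v_{\rho_2}$. Let $F(x,y)=x+y-vxy$ with $v\in R$. Let $\pi_*: R\llbracket \mathrm{CDiv}_T(X') \rrbracket_F/I_{\Sigma'} \to R\llbracket \mathrm{CDiv}_T(X) \rrbracket_F/I_\Sigma$ be a homomorphism of $R\llbracket \mathrm{CDiv}_T(X) \rrbracket_F/I_\Sigma$-modules (the source being a module via $\pi^*$) such that $\pi_*(1)=1$ and $\pi_*(x_{D_{\rho,\Sigma'}})=x_{D_{\rho,\Sigma}}$ for every $\rho\in\Sigma(1)$. Write $x_i$ for both $x_{D_{\rho_i,\Sigma'}}$ and $x_{D_{\rho_i,\Sigma}}$, $i=1,2$. Then \[ \pi_*(x_E)=v\,x_1x_2,\qquad \pi_*(x_E^n)=v\sum_{i=1}^{n}x_1^{n+1-i}x_2^i-\sum_{i=1}^{n-1}x_1^{n-i}x_2^i \ (n\geq 2), \] \[ \pi_*(x_a^s x_E^t)=x_a\,x_b^t\,(x_a-_F x_b)^{s-1}\quad (s\geq1,\ t\geq0,\ \{a,b\}=\{1,2\}). \]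
   Context: Let $R$ be a commutative ring and $F$ a one-dimensional commutative formal group law over $R$; write $x+_F y=F(x,y)$ and $x-_F y = x+_F \chi(y)$ where $\chi$ is the formal inverse. For an abelian group $M$, the formal group ring $R\llbracket M\rrbracket_F$ is the quotient of the completion of $R[x_\lambda:\lambda\in M]$ at the kernel of the augmentation $x_\lambda\mapsto0$ by the closure of the ideal generated by $x_0$ and $x_{\lambda+\mu}-(x_\lambda+_F x_\mu)$; classes are denoted $x_\lambda$. $T$ is a split torus with cocharacter lattice $T_*$. A smooth toric variety $X$ has fan $\Sigma$ in $T_*$; $\Sigma(1)$ its rays, $\theta(1)$ the rays of a cone $\theta$, $v_\rho$ the primitive generator of $\rho$. For a fan $\Delta$ with toric variety $Y$, $\mathrm{CDiv}_T(Y)=\bigoplus_{\rho\in\Delta(1)}\mathbb{Z}D_{\rho,\Delta}$ (free on $T$-invariant prime divisors), and $I_\Delta$ is the ideal of $R\llbracket\mathrm{CDiv}_T(Y)\rrbracket_F$ generated by $\prod_{\rho\in S}x_{D_{\rho,\Delta}}$ over all $S\subseteq\Delta(1)$ with $S\not\subseteq\theta(1)$ for every cone $\theta\in\Delta$. The star subdivision of $\Sigma$ relative to $\sigma$ is $\Sigma'=\{\theta\in\Sigma:\sigma\not\subseteq\theta\}\cup\bigcup_{\sigma\subseteq\theta}\{\mathrm{cone}(S): S\subseteq\{v_\sigma\}\cup\{v_\rho:\rho\in\theta(1)\},\ \{v_\rho:\rho\in\sigma(1)\}\not\subseteq S\}$, where $v_\sigma=\sum_{\rho\in\sigma(1)}v_\rho$;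 thus $\Sigma'(1)=\Sigma(1)\cup\{\widetilde\rho\}$ with $\widetilde\rho$ generated by $v_\sigma$, $E=D_{\widetilde\rho,\Sigma'}$, and $\mathrm{CDiv}_T(X')=\mathrm{CDiv}_T(X)\oplus\mathbb{Z}E$. The pull-back $\pi^*: R\llbracket\mathrm{CDiv}_T(X)\rrbracket_F/I_\Sigma\to R\llbracket\mathrm{CDiv}_T(X')\rrbracket_F/I_{\Sigma'}$ is the $R$-algebra homomorphism with $x_{D_{\rho,\Sigma}}\mapsto x_{D_{\rho,\Sigma'}}$ if $\rho\notin\sigma(1)$ and $x_{D_{\rho,\Sigma}}\mapsto x_{D_{\rho,\Sigma'}+E}=x_{D_{\rho,\Sigma'}}+_F x_E$ if $\rho\in\sigma(1)$. *)

theory Defs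
  imports Complex_Main "HOL-Library.Function_Algebras" "HOL-Algebra.QuotRing"
begin

text \<open>The lattice T_* is Z^d, modelled as functions 'd => int with 'd a finite type.
  A smooth (hence simplicial) cone is determined by the set of primitive generators of
  its rays, so a smooth fan is encoded as the set of the ray-generator sets of its cones.\<close>

definition rcone :: "('d::finite \<Rightarrow> int) set \<Rightarrow> ('d \<Rightarrow> real) set" where
  "rcone S = {x. \<exists>c. (\<forall>w\<in>S. c w \<ge> 0) \<and> (\<forall>i. x i = (\<Sum>w\<in>S. c w * real_of_int (w i)))}"

definition part_of_Z_basis :: "('d::finite \<Rightarrow> int) set \<Rightarrow> bool" where
  "part_of_Z_basis S \<longleftrightarrow>
     (\<exists>B. S \<subseteq> B \<and> finite B \<and> card B = card (UNIV :: 'd set) \<and>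
          (\<forall>w::'d \<Rightarrow> int. \<exists>c. \<forall>i. w i = (\<Sum>b\<in>B. c b * b i)))"

definition smooth_fan :: "('d::finite \<Rightarrow> int) set set \<Rightarrow> bool" where
  "smooth_fan Fan \<longleftrightarrow> finite Fan \<and> Fan \<noteq> {} \<and>
     (\<forall>\<theta>\<in>Fan. \<forall>\<tau>. \<tau> \<subseteq> \<theta> \<longrightarrow> \<tau> \<in> Fan) \<and>
     (\<forall>\<theta>\<in>Fan. part_of_Z_basis \<theta>) \<and>
     (\<forall>\<theta>\<in>Fan. \<forall>\<theta>'\<in>Fan. rcone \<theta> \<inter> rcone \<theta>' = rcone (\<theta> \<inter> \<theta>'))"

definition rays :: "'a set set \<Rightarrow> 'a set" where
  "rays Fan = {\<rho>. {\<rho>} \<in> Fan}"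

definition star_subdivision ::
  "('d::finite \<Rightarrow> int) set set \<Rightarrow> ('d \<Rightarrow> int) set \<Rightarrow> ('d \<Rightarrow> int) set set" where
  "star_subdivision Fan \<sigma> =
     {\<theta>\<in>Fan. \<not> \<sigma> \<subseteq> \<theta>} \<union>
     (\<Union>\<theta>\<in>{\<theta>\<in>Fan. \<sigma> \<subseteq> \<theta>}. {S. S \<subseteq> insert (\<Sum>w\<in>\<sigma>. w) \<theta> \<and> \<not> \<sigma> \<subseteq> S})"

text \<open>For the free abelian group CDiv_T = Z^{Sigma(1)} the formal group ring
  R[[CDiv_T]]_F is the power series ring R[[x_{D_rho} : rho in Sigma(1)]].\<close>

definition mps_mult :: "(('v \<Rightarrow> nat) \<Rightarrow> 'r::comm_ring_1) \<Rightarrow> (('v \<Rightarrow> nat) \<Rightarrow> 'r) \<Rightarrow> ('v \<Rightarrow> nat) \<Rightarrow> 'r" where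
  "mps_mult f g = (\<lambda>\<alpha>. \<Sum>\<beta>\<in>{\<beta>. \<beta> \<le> \<alpha>}. f \<beta> * g (\<alpha> - \<beta>))"

definition mps_const :: "'r::comm_ring_1 \<Rightarrow> ('v \<Rightarrow> nat) \<Rightarrow> 'r" where
  "mps_const r = (\<lambda>\<alpha>. if \<alpha> = 0 then r else 0)"

definition mps_pow :: "(('v \<Rightarrow> nat) \<Rightarrow> 'r::comm_ring_1) \<Rightarrow> nat \<Rightarrow> ('v \<Rightarrow> nat) \<Rightarrow> 'r" where
  "mps_pow f n = (mps_mult f ^^ n) (mps_const 1)"

definition mps_smult :: "'r::comm_ring_1 \<Rightarrow> (('v \<Rightarrow> nat) \<Rightarrow> 'r) \<Rightarrow> ('v \<Rightarrow> nat) \<Rightarrow> 'r" where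
  "mps_smult r f = (\<lambda>\<alpha>. r * f \<alpha>)"

definition mvar :: "'v \<Rightarrow> ('v \<Rightarrow> nat) \<Rightarrow> 'r::comm_ring_1" where
  "mvar x = (\<lambda>\<alpha>. if \<alpha> = (\<lambda>y. if y = x then 1 else 0) then 1 else 0)"

definition sqfree_mon :: "'v set \<Rightarrow> ('v \<Rightarrow> nat) \<Rightarrow> 'r::comm_ring_1" where
  "sqfree_mon S = (\<lambda>\<alpha>. if \<alpha> = (\<lambda>y. if y \<in> S then 1 else 0) then 1 else 0)"

definition mps :: "'v set \<Rightarrow> (('v \<Rightarrow> nat) \<Rightarrow> 'r::comm_ring_1) ring" where
  "mps V = \<lparr>carrier = {f. \<forall>\<alpha>. f \<alpha> \<noteq> 0 \<longrightarrow> finite {x. \<alpha> x \<noteq> 0} \<and> (\<forall>x. \<alpha> x \<noteq> 0 \<longrightarrow> x \<in> V)},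
            mult = mps_mult, one = mps_const 1, zero = (\<lambda>\<alpha>. 0), add = (+)\<rparr>"

definition SR_ideal :: "('d::finite \<Rightarrow> int) set set \<Rightarrow> ((('d \<Rightarrow> int) \<Rightarrow> nat) \<Rightarrow> 'r::comm_ring_1) set" where
  "SR_ideal Fan = Idl\<^bsub>mps (rays Fan)\<^esub>
     {sqfree_mon S | S. S \<subseteq> rays Fan \<and> (\<forall>\<theta>\<in>Fan. \<not> S \<subseteq> \<theta>)}"

definition face_ring :: "('d::finite \<Rightarrow> int) set set \<Rightarrow> ((('d \<Rightarrow> int) \<Rightarrow> nat) \<Rightarrow> 'r::comm_ring_1) set ring" where
  "face_ring Fan = mps (rays Fan) Quot SR_ideal Fan"

definition cls :: "('d::finite \<Rightarrow> int) set set \<Rightarrow> ((('d \<Rightarrow> int) \<Rightarrow> nat) \<Rightarrow> 'r::comm_ring_1) \<Rightarrow> ((('d \<Rightarrow> int) \<Rightarrow> nat) \<Rightarrow> 'r) set" where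
  "cls Fan f = SR_ideal Fan +>\<^bsub>mps (rays Fan)\<^esub> f"

definition fgl_add :: "'r::comm_ring_1 \<Rightarrow> (('v \<Rightarrow> nat) \<Rightarrow> 'r) \<Rightarrow> (('v \<Rightarrow> nat) \<Rightarrow> 'r) \<Rightarrow> ('v \<Rightarrow> nat) \<Rightarrow> 'r" where
  "fgl_add v a b = a + b - mps_smult v (mps_mult a b)"

text \<open>Formal inverse of F applied to the variable x_b:
  chi(x_b) = - x_b / (1 - v x_b) = - sum_{k>=0} v^k x_b^(k+1).\<close>
definition fgl_inv_var :: "'r::comm_ring_1 \<Rightarrow> 'v \<Rightarrow> ('v \<Rightarrow> nat) \<Rightarrow> 'r" where
  "fgl_inv_var v b = (\<lambda>\<alpha>. if 1 \<le> \<alpha> b \<and> (\<forall>y. y \<noteq> b \<longrightarrow> \<alpha> y = 0) then - (v ^ (\<alpha> b - 1)) else 0)"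

definition fgl_sub_var :: "'r::comm_ring_1 \<Rightarrow> 'v \<Rightarrow> 'v \<Rightarrow> ('v \<Rightarrow> nat) \<Rightarrow> 'r" where
  "fgl_sub_var v a b = fgl_add v (mvar a) (fgl_inv_var v b)"

end

theory Submission
  imports Defs
begin



definition MS :: "'v set \<Rightarrow> ('v \<Rightarrow> nat) set" where
  "MS V = {\<alpha>. finite {x. \<alpha> x \<noteq> 0} \<and> (\<forall>x. \<alpha> x \<noteq> 0 \<longrightarrow> x \<in> V)}"

lemma carrier_mps: "carrier (mps V) = {f. \<forall>\<alpha>. f \<alpha> \<noteq> 0 \<longrightarrow> \<alpha> \<in> MS V}"
  by (simp add: mps_def MS_def)

lemma mps_simps[simp]: "mult (mps V) = mps_mult" "one (mps V) = mps_const 1"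
  "zero (mps V) = (\<lambda>\<alpha>. 0)" "add (mps V) = (+)"
  by (simp_all add: mps_def)

lemma MS_split: assumes "\<beta> \<le> (\<alpha>::'v\<Rightarrow>nat)"
  shows "\<alpha> \<in> MS V \<longleftrightarrow> \<beta> \<in> MS V \<and> \<alpha> - \<beta> \<in> MS V"
proof -
  have e: "{x. \<alpha> x \<noteq> 0} = {x. \<beta> x \<noteq> 0} \<union> {x. (\<alpha> - \<beta>) x \<noteq> 0}"
  proof -
    have pw: "\<And>x. \<beta> x \<le> \<alpha> x" using assms by (simp add: le_fun_def)
    show ?thesis using pw by (auto simp: le_fun_def) (metis less_le_trans)
  qed
  have m: "\<And>\<gamma>. \<gamma> \<in> MS V \<longleftrightarrow> finite {x. \<gamma> x \<noteq> 0} \<and> {x. \<gamma> x \<noteq> 0} \<subseteq> V" by (auto simp: MS_def)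
  show ?thesis unfolding m e by auto
qed

lemma finite_le: assumes "finite {x. \<alpha> x \<noteq> 0}"
  shows "finite {\<beta>. \<beta> \<le> (\<alpha>::'v\<Rightarrow>nat)}"
proof -
  let ?S = "{x. \<alpha> x \<noteq> 0}"
  have "inj_on (\<lambda>\<beta>. restrict \<beta> ?S) {\<beta>. \<beta> \<le> \<alpha>}"
  proof (rule inj_onI)
    fix b c assume "b \<in> {\<beta>. \<beta> \<le> \<alpha>}" "c \<in> {\<beta>. \<beta> \<le> \<alpha>}" "restrict b ?S = restrict c ?S"
    then show "b = c" unfolding fun_eq_iff le_fun_def restrict_def
      by (metis (mono_tags, lifting) le_zero_eq mem_Collect_eq)
  qed
  moreover have "(\<lambda>\<beta>. restrict \<beta> ?S) ` {\<beta>. \<beta> \<le> \<alpha>} \<subseteq> PiE ?S (\<lambda>x. {0..\<alpha> x})"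
    by (auto simp: le_fun_def PiE_iff restrict_def extensional_def split: if_splits)
  moreover have "finite (PiE ?S (\<lambda>x. {0..\<alpha> x}))" using assms by (intro finite_PiE) auto
  ultimately show ?thesis by (meson finite_imageD finite_subset)
qed

lemma mult_zero_out:
  assumes f: "f \<in> carrier (mps V)" and g: "g \<in> carrier (mps V)" and a: "\<alpha> \<notin> MS V"
  shows "mps_mult f g \<alpha> = 0"
proof -
  have "f \<beta> * g (\<alpha> - \<beta>) = 0" if "\<beta> \<le> \<alpha>" for \<beta>
  proof -
    have "\<beta> \<notin> MS V \<or> \<alpha> - \<beta> \<notin> MS V" using MS_split[OF that, of V] a by blast
    have cf: "\<And>\<gamma>. \<gamma> \<notin> MS V \<Longrightarrow> f \<gamma> = 0" using f unfolding carrier_mps by blast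
    have cg: "\<And>\<gamma>. \<gamma> \<notin> MS V \<Longrightarrow> g \<gamma> = 0" using g unfolding carrier_mps by blast
    show ?thesis using cf cg \<open>\<beta> \<notin> MS V \<or> \<alpha> - \<beta> \<notin> MS V\<close> by auto
  qed
  then show ?thesis unfolding mps_mult_def by simp
qed

lemma mult_closed:
  assumes f: "f \<in> carrier (mps V)" and g: "g \<in> carrier (mps V)"
  shows "mps_mult f g \<in> carrier (mps V)"
  unfolding carrier_mps using mult_zero_out[OF f g] by blast

lemma mult_assoc_mps:
  assumes f: "f \<in> carrier (mps V)" and g: "g \<in> carrier (mps V)" and h: "h \<in> carrier (mps V)"
  shows "mps_mult (mps_mult f g) h = mps_mult f (mps_mult g h)"
proof
  fix \<alpha>
  show "mps_mult (mps_mult f g) h \<alpha> = mps_mult f (mps_mult g h) \<alpha>"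
  proof (cases "\<alpha> \<in> MS V")
    case False
    then show ?thesis using mult_zero_out mult_closed f g h by metis
  next
    case True
    then have fin: "finite {\<beta>. \<beta> \<le> \<alpha>}" by (simp add: MS_def finite_le)
    have fin2: "finite {\<gamma>. \<gamma> \<le> \<beta>}" if "\<beta> \<le> \<alpha>" for \<beta>
      by (rule finite_subset[OF _ fin]) (use that order_trans in blast)
    have fin3: "finite {\<gamma>. \<gamma> \<le> \<alpha> - \<beta>}" for \<beta>
      by (rule finite_subset[OF _ fin]) (auto simp: le_fun_def intro: order_trans)
    have "mps_mult (mps_mult f g) h \<alpha> =
        (\<Sum>\<beta>\<in>{\<beta>. \<beta> \<le> \<alpha>}. \<Sum>\<gamma>\<in>{\<gamma>. \<gamma> \<le> \<beta>}. f \<gamma> * g (\<beta> - \<gamma>) * h (\<alpha> - \<beta>))"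
      by (simp add: mps_mult_def sum_distrib_right)
    also have "\<dots> = (\<Sum>p\<in>Sigma {\<beta>. \<beta> \<le> \<alpha>} (\<lambda>\<beta>. {\<gamma>. \<gamma> \<le> \<beta>}). f (snd p) * g (fst p - snd p) * h (\<alpha> - fst p))"
      using fin fin2 by (subst sum.Sigma) (auto simp: split_beta)
    also have "\<dots> = (\<Sum>p\<in>Sigma {\<gamma>. \<gamma> \<le> \<alpha>} (\<lambda>\<gamma>. {\<delta>. \<delta> \<le> \<alpha> - \<gamma>}). f (fst p) * (g (snd p) * h (\<alpha> - fst p - snd p)))"
    proof (rule sum.reindex_bij_witness[where i="\<lambda>(\<gamma>,\<delta>). (\<gamma>+\<delta>, \<gamma>)" and j="\<lambda>(\<beta>,\<gamma>). (\<gamma>, \<beta>-\<gamma>)"])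
      fix p assume "p \<in> Sigma {\<beta>. \<beta> \<le> \<alpha>} (\<lambda>\<beta>. {\<gamma>. \<gamma> \<le> \<beta>})"
      then obtain b c where p: "p = (b,c)" "b \<le> \<alpha>" "c \<le> b" by auto
      then have pw: "\<And>x. b x \<le> \<alpha> x" "\<And>x. c x \<le> b x" by (auto simp: le_fun_def)
      show "(case (case p of (\<beta>, \<gamma>) \<Rightarrow> (\<gamma>, \<beta> - \<gamma>)) of (\<gamma>, \<delta>) \<Rightarrow> (\<gamma> + \<delta>, \<gamma>)) = p"
        using pw p by (simp add: fun_eq_iff)
      show "(case p of (\<beta>, \<gamma>) \<Rightarrow> (\<gamma>, \<beta> - \<gamma>)) \<in> Sigma {\<gamma>. \<gamma> \<le> \<alpha>} (\<lambda>\<gamma>. {\<delta>. \<delta> \<le> \<alpha> - \<gamma>})"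
        using pw p by (simp add: le_fun_def) (meson diff_le_mono le_trans)
      show "f (fst (case p of (\<beta>, \<gamma>) \<Rightarrow> (\<gamma>, \<beta> - \<gamma>))) *
          (g (snd (case p of (\<beta>, \<gamma>) \<Rightarrow> (\<gamma>, \<beta> - \<gamma>))) *
           h (\<alpha> - fst (case p of (\<beta>, \<gamma>) \<Rightarrow> (\<gamma>, \<beta> - \<gamma>)) - snd (case p of (\<beta>, \<gamma>) \<Rightarrow> (\<gamma>, \<beta> - \<gamma>)))) =
          f (snd p) * g (fst p - snd p) * h (\<alpha> - fst p)"
      proof -
        have "\<alpha> - c - (b - c) = \<alpha> - b" using pw by (simp add: fun_eq_iff)
        then show ?thesis using p by (simp add: mult.assoc)
      qed
    next
      fix p assume "p \<in> Sigma {\<gamma>. \<gamma> \<le> \<alpha>} (\<lambda>\<gamma>. {\<delta>. \<delta> \<le> \<alpha> - \<gamma>})"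
      then obtain c d where p: "p = (c,d)" "c \<le> \<alpha>" "d \<le> \<alpha> - c" by auto
      then have pw: "\<And>x. c x \<le> \<alpha> x" "\<And>x. d x \<le> \<alpha> x - c x" by (auto simp: le_fun_def)
      show "(case (case p of (\<gamma>, \<delta>) \<Rightarrow> (\<gamma> + \<delta>, \<gamma>)) of (\<beta>, \<gamma>) \<Rightarrow> (\<gamma>, \<beta> - \<gamma>)) = p"
        using p by (simp add: fun_eq_iff)
      show "(case p of (\<gamma>, \<delta>) \<Rightarrow> (\<gamma> + \<delta>, \<gamma>)) \<in> Sigma {\<beta>. \<beta> \<le> \<alpha>} (\<lambda>\<beta>. {\<gamma>. \<gamma> \<le> \<beta>})"
        using pw p by (simp add: le_fun_def) (metis le_add_diff_inverse add.commute add_le_mono1)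
    qed
    also have "\<dots> = mps_mult f (mps_mult g h) \<alpha>"
      using fin fin3 by (simp add: mps_mult_def sum_distrib_left sum.Sigma split_beta)
    finally show ?thesis .
  qed
qed

lemma mult_comm_mps: "mps_mult f g = mps_mult g f"
proof
  fix \<alpha>
  show "mps_mult f g \<alpha> = mps_mult g f \<alpha>" unfolding mps_mult_def
  proof (rule sum.reindex_bij_witness[where i="\<lambda>\<beta>. \<alpha> - \<beta>" and j="\<lambda>\<beta>. \<alpha> - \<beta>"])
    fix b assume "b \<in> {\<beta>. \<beta> \<le> \<alpha>}"
    then have pw: "\<And>x. b x \<le> \<alpha> x" by (auto simp: le_fun_def)
    show "\<alpha> - (\<alpha> - b) = b" using pw by (simp add: fun_eq_iff)
  next
    fix b show "\<alpha> - b \<in> {\<beta>. \<beta> \<le> \<alpha>}" by (simp add: le_fun_def)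
  next
    fix b assume "b \<in> {\<beta>. \<beta> \<le> \<alpha>}"
    then have pw: "\<And>x. b x \<le> \<alpha> x" by (auto simp: le_fun_def)
    show "\<alpha> - (\<alpha> - b) = b" using pw by (simp add: fun_eq_iff)
  next
    fix b show "\<alpha> - b \<in> {\<beta>. \<beta> \<le> \<alpha>}" by (simp add: le_fun_def)
  next
    fix b assume "b \<in> {\<beta>. \<beta> \<le> \<alpha>}"
    then have pw: "\<And>x. b x \<le> \<alpha> x" by (auto simp: le_fun_def)
    have "\<alpha> - (\<alpha> - b) = b" using pw by (simp add: fun_eq_iff)
    then show "g (\<alpha> - b) * f (\<alpha> - (\<alpha> - b)) = f b * g (\<alpha> - b)" by (simp add: mult.commute)
  qed
qed

lemma const_closed: "mps_const r \<in> carrier (mps V)"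
  by (auto simp: carrier_mps mps_const_def MS_def)

lemma one_mult_mps: assumes g: "g \<in> carrier (mps V)" shows "mps_mult (mps_const 1) g = g"
proof
  fix \<alpha>
  show "mps_mult (mps_const 1) g \<alpha> = g \<alpha>"
  proof (cases "\<alpha> \<in> MS V")
    case False
    then show ?thesis using mult_zero_out[OF const_closed g] g by (auto simp: carrier_mps)
  next
    case True
    then have fin: "finite {\<beta>. \<beta> \<le> \<alpha>}" by (simp add: MS_def finite_le)
    have "mps_mult (mps_const 1) g \<alpha> = (\<Sum>\<beta>\<in>{\<beta>. \<beta> \<le> \<alpha>}. if \<beta> = 0 then g (\<alpha> - \<beta>) else 0)"
      unfolding mps_mult_def mps_const_def by (rule sum.cong) auto
    also have "\<dots> = g \<alpha>" using fin by (simp add: sum.delta' le_fun_def)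
    finally show ?thesis .
  qed
qed

lemma distrib_mps: "mps_mult (f + g) h = mps_mult f h + mps_mult g h"
  by (simp add: mps_mult_def fun_eq_iff distrib_right sum.distrib)

lemma cring_mps: "cring (mps V :: (('v \<Rightarrow> nat) \<Rightarrow> 'r::comm_ring_1) ring)"
proof (rule cringI)
  show "abelian_group (mps V :: (('v \<Rightarrow> nat) \<Rightarrow> 'r) ring)"
  proof (rule abelian_groupI)
    fix x y :: "('v \<Rightarrow> nat) \<Rightarrow> 'r" assume "x \<in> carrier (mps V)" "y \<in> carrier (mps V)"
    then show "x \<oplus>\<^bsub>mps V\<^esub> y \<in> carrier (mps V)" by (simp add: carrier_mps) (metis add.left_neutral add.right_neutral)
  next
    show "\<zero>\<^bsub>mps V\<^esub> \<in> carrier (mps V)" by (auto simp: carrier_mps)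
  next
    fix x :: "('v \<Rightarrow> nat) \<Rightarrow> 'r" assume "x \<in> carrier (mps V)"
    then show "\<exists>y\<in>carrier (mps V). y \<oplus>\<^bsub>mps V\<^esub> x = \<zero>\<^bsub>mps V\<^esub>"
      by (intro bexI[of _ "- x"]) (auto simp: carrier_mps fun_eq_iff)
  qed (auto simp: fun_eq_iff add.assoc add.commute)
next
  show "comm_monoid (mps V :: (('v \<Rightarrow> nat) \<Rightarrow> 'r) ring)"
    by (rule comm_monoidI) (auto simp: mult_closed const_closed mult_assoc_mps one_mult_mps intro: mult_comm_mps)
next
  fix x y z :: "('v \<Rightarrow> nat) \<Rightarrow> 'r" assume "x \<in> carrier (mps V)" "y \<in> carrier (mps V)" "z \<in> carrier (mps V)"
  show "(x \<oplus>\<^bsub>mps V\<^esub> y) \<otimes>\<^bsub>mps V\<^esub> z = x \<otimes>\<^bsub>mps V\<^esub> z \<oplus>\<^bsub>mps V\<^esub> y \<otimes>\<^bsub>mps V\<^esub> z"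
    by (simp add: distrib_mps)
qed

definition ind :: "'v \<Rightarrow> 'v \<Rightarrow> nat" where "ind a = (\<lambda>y. if y = a then 1 else 0)"

lemma ind_MS: "a \<in> V \<Longrightarrow> ind a \<in> MS V"
  by (auto simp: ind_def MS_def)

lemma mvar_closed: "a \<in> V \<Longrightarrow> (mvar a :: ('v \<Rightarrow> nat) \<Rightarrow> 'r::comm_ring_1) \<in> carrier (mps V)"
  by (auto simp: carrier_mps mvar_def ind_MS[unfolded ind_def])

lemma shift_mps:
  assumes a: "a \<in> V" and f: "f \<in> carrier (mps V)"
  shows "mps_mult (mvar a) f \<alpha> = (if 1 \<le> \<alpha> a then f (\<alpha> - ind a) else 0)"
proof (cases "\<alpha> \<in> MS V")
  case False
  have "f (\<alpha> - ind a) = 0" if "1 \<le> \<alpha> a"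
  proof -
    have "ind a \<le> \<alpha>" using that by (auto simp: le_fun_def ind_def)
    then have "\<alpha> - ind a \<notin> MS V" using MS_split[of "ind a" \<alpha> V] False ind_MS[OF a] by blast
    then show ?thesis using f by (auto simp: carrier_mps)
  qed
  then show ?thesis using mult_zero_out[OF mvar_closed[OF a] f False] by auto
next
  case True
  then have fin: "finite {\<beta>. \<beta> \<le> \<alpha>}" by (simp add: MS_def finite_le)
  have "mps_mult (mvar a) f \<alpha> = (\<Sum>\<beta>\<in>{\<beta>. \<beta> \<le> \<alpha>}. if \<beta> = ind a then f (\<alpha> - \<beta>) else 0)"
    unfolding mps_mult_def mvar_def ind_def by (rule sum.cong) auto
  also have "\<dots> = (if ind a \<le> \<alpha> then f (\<alpha> - ind a) else 0)" using fin by (simp add: sum.delta')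
  also have "(ind a \<le> \<alpha>) = (1 \<le> \<alpha> a)" by (auto simp: le_fun_def ind_def)
  finally show ?thesis .
qed

lemma const_mult_mps: assumes g: "g \<in> carrier (mps V)" shows "mps_mult (mps_const r) g = mps_smult r g"
proof
  fix \<alpha>
  show "mps_mult (mps_const r) g \<alpha> = mps_smult r g \<alpha>"
  proof (cases "\<alpha> \<in> MS V")
    case False
    have "g \<alpha> = 0" using g False unfolding carrier_mps by blast
    then show ?thesis using mult_zero_out[OF const_closed g False] by (simp add: mps_smult_def)
  next
    case True
    then have fin: "finite {\<beta>. \<beta> \<le> \<alpha>}" by (simp add: MS_def finite_le)
    have "mps_mult (mps_const r) g \<alpha> = (\<Sum>\<beta>\<in>{\<beta>. \<beta> \<le> \<alpha>}. if \<beta> = 0 then r * g (\<alpha> - \<beta>) else 0)"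
      unfolding mps_mult_def mps_const_def by (rule sum.cong) auto
    also have "\<dots> = r * g \<alpha>" using fin by (simp add: sum.delta' le_fun_def)
    finally show ?thesis by (simp add: mps_smult_def)
  qed
qed

lemma sqfree_closed: "finite S \<Longrightarrow> S \<subseteq> V \<Longrightarrow> (sqfree_mon S :: ('v \<Rightarrow> nat) \<Rightarrow> 'r::comm_ring_1) \<in> carrier (mps V)"
  by (auto simp: carrier_mps sqfree_mon_def MS_def)

lemma mvar_mult_mvar:
  assumes "a \<in> V" "b \<in> V" "a \<noteq> b"
  shows "mps_mult (mvar a) (mvar b) = (sqfree_mon {a, b} :: ('v \<Rightarrow> nat) \<Rightarrow> 'r::comm_ring_1)"
proof
  fix \<alpha>
  have "(1 \<le> \<alpha> a \<and> \<alpha> - ind a = (\<lambda>y. if y = b then 1 else 0)) \<longleftrightarrow> \<alpha> = (\<lambda>y. if y \<in> {a, b} then 1 else 0)"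
  proof
    assume h: "1 \<le> \<alpha> a \<and> \<alpha> - ind a = (\<lambda>y. if y = b then 1 else 0)"
    show "\<alpha> = (\<lambda>y. if y \<in> {a, b} then 1 else 0)"
    proof
      fix y
      have "\<alpha> y - ind a y = (if y = b then 1 else 0)" using h by (simp add: fun_eq_iff)
      then show "\<alpha> y = (if y \<in> {a, b} then 1 else 0)" using h assms(3) by (auto simp: ind_def split: if_splits)
    qed
  next
    assume "\<alpha> = (\<lambda>y. if y \<in> {a, b} then 1 else 0)"
    then show "1 \<le> \<alpha> a \<and> \<alpha> - ind a = (\<lambda>y. if y = b then 1 else 0)" using assms(3) by (auto simp: ind_def fun_eq_iff)
  qed
  then show "mps_mult (mvar a) (mvar b) \<alpha> = (sqfree_mon {a, b} :: ('v \<Rightarrow> nat) \<Rightarrow> 'r) \<alpha>"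
    unfolding shift_mps[OF assms(1) mvar_closed[OF assms(2)]] by (auto simp: mvar_def sqfree_mon_def)
qed

lemma inv_closed: "b \<in> V \<Longrightarrow> (fgl_inv_var v b :: ('v \<Rightarrow> nat) \<Rightarrow> 'r::comm_ring_1) \<in> carrier (mps V)"
proof -
  assume b: "b \<in> V"
  have "\<alpha> \<in> MS V" if "\<forall>y. y \<noteq> b \<longrightarrow> \<alpha> y = 0" for \<alpha> :: "'v \<Rightarrow> nat"
  proof -
    have "{x. \<alpha> x \<noteq> 0} \<subseteq> {b}" using that by auto
    then show ?thesis using b finite_subset by (auto simp: MS_def)
  qed
  then show ?thesis by (auto simp: carrier_mps fgl_inv_var_def)
qed

lemma inv_identity:
  assumes b: "b \<in> V"
  shows "fgl_inv_var v b - mps_smult v (mps_mult (mvar b) (fgl_inv_var v b)) = - (mvar b :: ('v \<Rightarrow> nat) \<Rightarrow> 'r::comm_ring_1)"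
proof
  fix \<alpha> :: "'v \<Rightarrow> nat"
  have ic: "(fgl_inv_var v b :: ('v \<Rightarrow> nat) \<Rightarrow> 'r) \<in> carrier (mps V)" by (rule inv_closed[OF b])
  have sh: "mps_mult (mvar b) (fgl_inv_var v b) \<alpha> = (if 1 \<le> \<alpha> b then (fgl_inv_var v b :: ('v \<Rightarrow> nat) \<Rightarrow> 'r) (\<alpha> - ind b) else 0)"
    by (rule shift_mps[OF b ic])
  show "(fgl_inv_var v b - mps_smult v (mps_mult (mvar b) (fgl_inv_var v b))) \<alpha> = (- mvar b :: ('v \<Rightarrow> nat) \<Rightarrow> 'r) \<alpha>"
  proof (cases "\<forall>y. y \<noteq> b \<longrightarrow> \<alpha> y = 0")
    case False
    then have ne: "\<alpha> \<noteq> (\<lambda>y. if y = b then 1 else 0)" by auto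
    have m0: "(mvar b :: ('v \<Rightarrow> nat) \<Rightarrow> 'r) \<alpha> = 0" unfolding mvar_def using ne by simp
    have n2: "\<not> (\<forall>y. y \<noteq> b \<longrightarrow> (\<alpha> - ind b) y = 0)" using False by (auto simp: ind_def)
    have i1: "(fgl_inv_var v b :: ('v \<Rightarrow> nat) \<Rightarrow> 'r) \<alpha> = 0" unfolding fgl_inv_var_def by (rule if_not_P) (use False in blast)
    have i2: "(fgl_inv_var v b :: ('v \<Rightarrow> nat) \<Rightarrow> 'r) (\<alpha> - ind b) = 0" unfolding fgl_inv_var_def by (rule if_not_P) (use n2 in blast)
    show ?thesis unfolding minus_apply uminus_apply mps_smult_def sh i1 i2 m0 by simp
  next
    case True
    have t2: "\<forall>y. y \<noteq> b \<longrightarrow> (\<alpha> - ind b) y = 0" using True by (auto simp: ind_def)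
    have ib: "(\<alpha> - ind b) b = \<alpha> b - 1" by (simp add: ind_def)
    have e1: "(1 \<le> \<alpha> b \<and> (\<forall>y. y \<noteq> b \<longrightarrow> \<alpha> y = 0)) = (1 \<le> \<alpha> b)" using True by blast
    have e2: "(1 \<le> \<alpha> b - 1 \<and> (\<forall>y. y \<noteq> b \<longrightarrow> (\<alpha> - ind b) y = 0)) = (1 \<le> \<alpha> b - 1)"
      using t2 by blast
    have fa: "(fgl_inv_var v b :: ('v \<Rightarrow> nat) \<Rightarrow> 'r) \<alpha> = (if 1 \<le> \<alpha> b then - (v ^ (\<alpha> b - 1)) else 0)"
      unfolding fgl_inv_var_def e1 ..
    have fb: "(fgl_inv_var v b :: ('v \<Rightarrow> nat) \<Rightarrow> 'r) (\<alpha> - ind b) = (if 1 \<le> \<alpha> b - 1 then - (v ^ (\<alpha> b - 1 - 1)) else 0)"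
      unfolding fgl_inv_var_def ib unfolding e2 ..
    have mb: "(\<alpha> = (\<lambda>y. if y = b then 1 else 0)) = (\<alpha> b = 1)"
    proof
      assume "\<alpha> b = 1" then show "\<alpha> = (\<lambda>y. if y = b then 1 else 0)" using True by (auto simp: fun_eq_iff)
    qed simp
    have ma: "(mvar b :: ('v \<Rightarrow> nat) \<Rightarrow> 'r) \<alpha> = (if \<alpha> b = 1 then 1 else 0)" unfolding mvar_def mb ..
    have key: "(if 1 \<le> n then - (v ^ (n - 1)) else 0) - v * (if 1 \<le> n then if 1 \<le> n - 1 then - (v ^ (n - 1 - 1)) else 0 else 0) =
          - (if n = 1 then 1 else (0::'r))" for n :: nat
    proof (cases n)
      case 0 then show ?thesis by simp
    next
      case (Suc m) then show ?thesis by (cases m) simp_all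
    qed
    show ?thesis unfolding minus_apply uminus_apply mps_smult_def sh fa fb ma by (rule key)
  qed
qed


lemma pow_mps: fixes f :: "('v \<Rightarrow> nat) \<Rightarrow> 'r::comm_ring_1" assumes f: "f \<in> carrier (mps V)"
  shows "mps_pow f n = f [^]\<^bsub>mps V\<^esub> (n::nat)"
proof (induction n)
  case 0 then show ?case by (simp add: mps_pow_def)
next
  case (Suc n)
  interpret cring "mps V :: (('v \<Rightarrow> nat) \<Rightarrow> 'r) ring" by (rule cring_mps)
  have "mps_pow f (Suc n) = mps_mult f (mps_pow f n)" by (simp add: mps_pow_def)
  also have "\<dots> = f \<otimes>\<^bsub>mps V\<^esub> f [^]\<^bsub>mps V\<^esub> n" using Suc by simp
  also have "\<dots> = f [^]\<^bsub>mps V\<^esub> (Suc n)" by (simp add: mult_comm_mps)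
  finally show ?case .
qed

lemma sum_mps: assumes f: "f \<in> I \<rightarrow> carrier (mps V)"
  shows "sum f I = finsum (mps V :: (('v \<Rightarrow> nat) \<Rightarrow> 'r::comm_ring_1) ring) f I"
  using f
proof (induction I rule: infinite_finite_induct)
  case (infinite A)
  interpret cring "mps V :: (('v \<Rightarrow> nat) \<Rightarrow> 'r) ring" by (rule cring_mps)
  show ?case using infinite by (simp add: finsum_infinite zero_fun_def)
next
  case empty
  interpret cring "mps V :: (('v \<Rightarrow> nat) \<Rightarrow> 'r) ring" by (rule cring_mps)
  show ?case by (simp add: zero_fun_def)
next
  case (insert x F)
  interpret cring "mps V :: (('v \<Rightarrow> nat) \<Rightarrow> 'r) ring" by (rule cring_mps)
  show ?case using insert by (simp add: finsum_insert)
qed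

lemma minus_mps: assumes "f \<in> carrier (mps V)" "g \<in> carrier (mps V)"
  shows "f - g = f \<ominus>\<^bsub>(mps V :: (('v \<Rightarrow> nat) \<Rightarrow> 'r::comm_ring_1) ring)\<^esub> g"
proof -
  interpret cring "mps V :: (('v \<Rightarrow> nat) \<Rightarrow> 'r) ring" by (rule cring_mps)
  have ng: "- g \<in> carrier (mps V)" using assms(2) by (auto simp: carrier_mps)
  have "\<ominus>\<^bsub>mps V\<^esub> g = - g"
    by (rule minus_equality) (use assms(2) ng in \<open>auto simp: fun_eq_iff\<close>)
  then show ?thesis by (simp add: a_minus_def)
qed

lemma smult_mps: fixes g :: "('v \<Rightarrow> nat) \<Rightarrow> 'r::comm_ring_1" assumes "g \<in> carrier (mps V)"
  shows "mps_smult r g = mps_const r \<otimes>\<^bsub>mps V\<^esub> g"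
  using const_mult_mps[OF assms] by simp

lemma face_facts:
  fixes F :: "('d::finite \<Rightarrow> int) set set"
  assumes fin: "finite (rays F)"
  shows "ideal (SR_ideal F :: ((('d \<Rightarrow> int) \<Rightarrow> nat) \<Rightarrow> 'r::comm_ring_1) set) (mps (rays F))"
    and "cring (face_ring F :: ((('d \<Rightarrow> int) \<Rightarrow> nat) \<Rightarrow> 'r) set ring)"
    and "ring_hom_cring (mps (rays F)) (face_ring F :: ((('d \<Rightarrow> int) \<Rightarrow> nat) \<Rightarrow> 'r) set ring) (cls F)"
    and "S \<subseteq> rays F \<Longrightarrow> (\<forall>\<theta>\<in>F. \<not> S \<subseteq> \<theta>) \<Longrightarrow>
         cls F (sqfree_mon S :: (('d \<Rightarrow> int) \<Rightarrow> nat) \<Rightarrow> 'r) = \<zero>\<^bsub>face_ring F :: ((('d \<Rightarrow> int) \<Rightarrow> nat) \<Rightarrow> 'r) set ring\<^esub>"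
proof -
  interpret R: cring "mps (rays F) :: ((('d \<Rightarrow> int) \<Rightarrow> nat) \<Rightarrow> 'r) ring" by (rule cring_mps)
  let ?G = "{sqfree_mon S :: (('d \<Rightarrow> int) \<Rightarrow> nat) \<Rightarrow> 'r | S. S \<subseteq> rays F \<and> (\<forall>\<theta>\<in>F. \<not> S \<subseteq> \<theta>)}"
  have G: "?G \<subseteq> carrier (mps (rays F))"
    using fin by (auto intro!: sqfree_closed dest: finite_subset)
  show I: "ideal (SR_ideal F :: ((('d \<Rightarrow> int) \<Rightarrow> nat) \<Rightarrow> 'r) set) (mps (rays F))"
    unfolding SR_ideal_def by (rule R.genideal_ideal[OF G])
  show C: "cring (face_ring F :: ((('d \<Rightarrow> int) \<Rightarrow> nat) \<Rightarrow> 'r) set ring)"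
    unfolding face_ring_def by (rule ideal.quotient_is_cring[OF I R.is_cring])
  have clsd: "cls F = a_r_coset (mps (rays F)) (SR_ideal F :: ((('d \<Rightarrow> int) \<Rightarrow> nat) \<Rightarrow> 'r) set)"
    by (simp add: fun_eq_iff cls_def)
  show "ring_hom_cring (mps (rays F)) (face_ring F :: ((('d \<Rightarrow> int) \<Rightarrow> nat) \<Rightarrow> 'r) set ring) (cls F)"
    by (intro ring_hom_cring.intro ring_hom_cring_axioms.intro R.is_cring C)
       (unfold clsd face_ring_def, rule ideal.rcos_ring_hom[OF I])
  assume S: "S \<subseteq> rays F" "\<forall>\<theta>\<in>F. \<not> S \<subseteq> \<theta>"
  have "sqfree_mon S \<in> (SR_ideal F :: ((('d \<Rightarrow> int) \<Rightarrow> nat) \<Rightarrow> 'r) set)"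
    unfolding SR_ideal_def using R.genideal_self[OF G] S by blast
  then show "cls F (sqfree_mon S :: (('d \<Rightarrow> int) \<Rightarrow> nat) \<Rightarrow> 'r) = \<zero>\<^bsub>face_ring F :: ((('d \<Rightarrow> int) \<Rightarrow> nat) \<Rightarrow> 'r) set ring\<^esub>"
    unfolding cls_def using R.a_rcos_zero[OF I] by (simp add: face_ring_def FactRing_def)
qed



lemma abstract_pf:
  fixes P (structure) and Q (structure)
  assumes P: "cring P" and Q: "cring Q"
    and pbh: "pb \<in> ring_hom P Q"
    and pff: "pf \<in> carrier Q \<rightarrow> carrier P"
    and pfadd0: "\<forall>a\<in>carrier Q. \<forall>b\<in>carrier Q. pf (a \<oplus>\<^bsub>Q\<^esub> b) = pf a \<oplus> pf b"
    and pflin0: "\<forall>a\<in>carrier P. \<forall>b\<in>carrier Q. pf (pb a \<otimes>\<^bsub>Q\<^esub> b) = a \<otimes> pf b"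
    and pf1: "pf \<one>\<^bsub>Q\<^esub> = \<one>"
    and cs: "X1 \<in> carrier P" "X2 \<in> carrier P" "c \<in> carrier P"
    and qs: "A \<in> carrier Q" "B \<in> carrier Q" "E \<in> carrier Q"
    and pfA: "pf A = X1" and pfB: "pf B = X2"
    and pb1: "pb X1 = A \<oplus>\<^bsub>Q\<^esub> E \<ominus>\<^bsub>Q\<^esub> pb c \<otimes>\<^bsub>Q\<^esub> (A \<otimes>\<^bsub>Q\<^esub> E)"
    and pb2: "pb X2 = B \<oplus>\<^bsub>Q\<^esub> E \<ominus>\<^bsub>Q\<^esub> pb c \<otimes>\<^bsub>Q\<^esub> (B \<otimes>\<^bsub>Q\<^esub> E)"
    and AB: "A \<otimes>\<^bsub>Q\<^esub> B = \<zero>\<^bsub>Q\<^esub>"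
  shows "pf E = c \<otimes> (X1 \<otimes> X2)"
    and "\<And>n. pf (E [^]\<^bsub>Q\<^esub> (Suc (Suc n))) = (X1 \<oplus> X2) \<otimes> pf (E [^]\<^bsub>Q\<^esub> (Suc n)) \<ominus> (X1 \<otimes> X2) \<otimes> pf (E [^]\<^bsub>Q\<^esub> n)"
    and "\<And>(s::nat) (t::nat) D W. D \<in> carrier P \<Longrightarrow> W \<in> carrier P \<Longrightarrow> D \<otimes> (\<one> \<ominus> c \<otimes> X2) = X1 \<ominus> X2 \<Longrightarrow>
          W \<otimes> (\<one> \<ominus> c \<otimes> X2) = \<one> \<Longrightarrow> 1 \<le> s \<Longrightarrow>
          pf (A [^]\<^bsub>Q\<^esub> s \<otimes>\<^bsub>Q\<^esub> E [^]\<^bsub>Q\<^esub> t) = X1 \<otimes> (X2 [^] t \<otimes> D [^] (s - 1))"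
proof -
  interpret P: cring P by (rule P)
  interpret Q: cring Q by (rule Q)
  have pfadd: "\<And>a b. a \<in> carrier Q \<Longrightarrow> b \<in> carrier Q \<Longrightarrow> pf (a \<oplus>\<^bsub>Q\<^esub> b) = pf a \<oplus> pf b"
    using pfadd0 by blast
  have pflin: "\<And>a b. a \<in> carrier P \<Longrightarrow> b \<in> carrier Q \<Longrightarrow> pf (pb a \<otimes>\<^bsub>Q\<^esub> b) = a \<otimes> pf b"
    using pflin0 by blast
  interpret h: ring_hom_cring P Q pb by (intro ring_hom_cring.intro ring_hom_cring_axioms.intro P Q pbh)
  have pfc: "pf x \<in> carrier P" if "x \<in> carrier Q" for x using pff that by auto
  have pfneg: "pf (\<ominus>\<^bsub>Q\<^esub> x) = \<ominus> pf x" if x: "x \<in> carrier Q" for x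
  proof -
    have "pf (\<ominus>\<^bsub>Q\<^esub> x) = pf (pb (\<ominus> \<one>) \<otimes>\<^bsub>Q\<^esub> x)" using x by (simp add: Q.l_minus)
    also have "\<dots> = \<ominus> \<one> \<otimes> pf x" using x pflin[of "\<ominus> \<one>" x] by simp
    also have "\<dots> = \<ominus> pf x" using pfc[OF x] by (simp add: P.l_minus)
    finally show ?thesis .
  qed
  have pfminus: "pf (x \<ominus>\<^bsub>Q\<^esub> y) = pf x \<ominus> pf y" if "x \<in> carrier Q" "y \<in> carrier Q" for x y
    using that by (simp add: a_minus_def pfadd pfneg)
  have pflin': "pf (b \<otimes>\<^bsub>Q\<^esub> pb a) = a \<otimes> pf b" if "a \<in> carrier P" "b \<in> carrier Q" for a b
    using that pflin by (simp add: Q.m_comm)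
  have pfpb: "pf (pb a) = a" if "a \<in> carrier P" for a
    using pflin[of a "\<one>\<^bsub>Q\<^esub>"] that by (simp add: pf1)
  have pbcl: "pb X1 \<in> carrier Q" "pb X2 \<in> carrier Q" "pb c \<in> carrier Q" using cs by auto
  note cl = qs cs pbcl
  have AE: "A \<otimes>\<^bsub>Q\<^esub> E = A \<otimes>\<^bsub>Q\<^esub> pb X2"
  proof -
    have "A \<otimes>\<^bsub>Q\<^esub> pb X2 = A \<otimes>\<^bsub>Q\<^esub> B \<oplus>\<^bsub>Q\<^esub> A \<otimes>\<^bsub>Q\<^esub> E \<ominus>\<^bsub>Q\<^esub> pb c \<otimes>\<^bsub>Q\<^esub> (A \<otimes>\<^bsub>Q\<^esub> B) \<otimes>\<^bsub>Q\<^esub> E"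
      unfolding pb2 using cl by algebra
    then show ?thesis using AB cl by (simp add: a_minus_def)
  qed
  show pfE: "pf E = c \<otimes> (X1 \<otimes> X2)"
  proof -
    have "X1 = pf (pb X1)" using cs by (simp add: pfpb)
    also have "\<dots> = pf A \<oplus> pf E \<ominus> pf (pb c \<otimes>\<^bsub>Q\<^esub> (A \<otimes>\<^bsub>Q\<^esub> pb X2))"
      unfolding pb1 AE using cl by (simp add: pfadd pfminus)
    also have "\<dots> = X1 \<oplus> pf E \<ominus> c \<otimes> (X2 \<otimes> X1)"
      using cl by (simp add: pflin pflin' pfA)
    finally have e: "X1 = X1 \<oplus> pf E \<ominus> c \<otimes> (X2 \<otimes> X1)" .
    have "pf E = (X1 \<oplus> pf E \<ominus> c \<otimes> (X2 \<otimes> X1)) \<ominus> X1 \<oplus> c \<otimes> (X1 \<otimes> X2)"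
      using cl pfc[of E] by algebra
    also have "\<dots> = c \<otimes> (X1 \<otimes> X2)" unfolding e[symmetric] using cl by algebra
    finally show ?thesis .
  qed
  have pbu: "pb (\<one> \<ominus> c \<otimes> X2) = \<one>\<^bsub>Q\<^esub> \<ominus>\<^bsub>Q\<^esub> pb c \<otimes>\<^bsub>Q\<^esub> pb X2"
    using cl by (simp add: a_minus_def)
  have pbd: "pb (X1 \<ominus> X2) = pb X1 \<ominus>\<^bsub>Q\<^esub> pb X2"
    using cl by (simp add: a_minus_def)
  have EE: "E \<otimes>\<^bsub>Q\<^esub> E = E \<otimes>\<^bsub>Q\<^esub> (pb X1 \<oplus>\<^bsub>Q\<^esub> pb X2) \<ominus>\<^bsub>Q\<^esub> pb X1 \<otimes>\<^bsub>Q\<^esub> pb X2"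
  proof -
    have "(pb X1 \<ominus>\<^bsub>Q\<^esub> E) \<otimes>\<^bsub>Q\<^esub> (pb X2 \<ominus>\<^bsub>Q\<^esub> E) =
       (A \<otimes>\<^bsub>Q\<^esub> B) \<ominus>\<^bsub>Q\<^esub> pb c \<otimes>\<^bsub>Q\<^esub> (A \<otimes>\<^bsub>Q\<^esub> B) \<otimes>\<^bsub>Q\<^esub> E \<ominus>\<^bsub>Q\<^esub> pb c \<otimes>\<^bsub>Q\<^esub> (A \<otimes>\<^bsub>Q\<^esub> B) \<otimes>\<^bsub>Q\<^esub> E \<oplus>\<^bsub>Q\<^esub> pb c \<otimes>\<^bsub>Q\<^esub> pb c \<otimes>\<^bsub>Q\<^esub> (A \<otimes>\<^bsub>Q\<^esub> B) \<otimes>\<^bsub>Q\<^esub> E \<otimes>\<^bsub>Q\<^esub> E"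
      unfolding pb1 pb2 using cl by algebra
    also have "\<dots> = \<zero>\<^bsub>Q\<^esub>" using AB cl by (simp add: a_minus_def)
    finally have z: "(pb X1 \<ominus>\<^bsub>Q\<^esub> E) \<otimes>\<^bsub>Q\<^esub> (pb X2 \<ominus>\<^bsub>Q\<^esub> E) = \<zero>\<^bsub>Q\<^esub>" .
    have "E \<otimes>\<^bsub>Q\<^esub> E = E \<otimes>\<^bsub>Q\<^esub> (pb X1 \<oplus>\<^bsub>Q\<^esub> pb X2) \<ominus>\<^bsub>Q\<^esub> pb X1 \<otimes>\<^bsub>Q\<^esub> pb X2 \<oplus>\<^bsub>Q\<^esub>
        (pb X1 \<ominus>\<^bsub>Q\<^esub> E) \<otimes>\<^bsub>Q\<^esub> (pb X2 \<ominus>\<^bsub>Q\<^esub> E)"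
      using cl by algebra
    then show ?thesis unfolding z using cl by simp
  qed
  show "pf (E [^]\<^bsub>Q\<^esub> (Suc (Suc n))) = (X1 \<oplus> X2) \<otimes> pf (E [^]\<^bsub>Q\<^esub> (Suc n)) \<ominus> (X1 \<otimes> X2) \<otimes> pf (E [^]\<^bsub>Q\<^esub> n)" for n
  proof -
    have "E [^]\<^bsub>Q\<^esub> (Suc (Suc n)) = E [^]\<^bsub>Q\<^esub> n \<otimes>\<^bsub>Q\<^esub> (E \<otimes>\<^bsub>Q\<^esub> E)"
      using cl by (simp add: Q.m_assoc)
    also have "\<dots> = E [^]\<^bsub>Q\<^esub> n \<otimes>\<^bsub>Q\<^esub> (E \<otimes>\<^bsub>Q\<^esub> (pb X1 \<oplus>\<^bsub>Q\<^esub> pb X2) \<ominus>\<^bsub>Q\<^esub> pb X1 \<otimes>\<^bsub>Q\<^esub> pb X2)"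
      by (simp only: EE)
    also have "\<dots> = pb (X1 \<oplus> X2) \<otimes>\<^bsub>Q\<^esub> (E [^]\<^bsub>Q\<^esub> n \<otimes>\<^bsub>Q\<^esub> E) \<ominus>\<^bsub>Q\<^esub> pb (X1 \<otimes> X2) \<otimes>\<^bsub>Q\<^esub> E [^]\<^bsub>Q\<^esub> n"
      unfolding h.hom_add[OF cs(1,2)] h.hom_mult[OF cs(1,2)] using cl Q.nat_pow_closed[of E n] by algebra
    finally have e: "E [^]\<^bsub>Q\<^esub> (Suc (Suc n)) = pb (X1 \<oplus> X2) \<otimes>\<^bsub>Q\<^esub> E [^]\<^bsub>Q\<^esub> (Suc n) \<ominus>\<^bsub>Q\<^esub> pb (X1 \<otimes> X2) \<otimes>\<^bsub>Q\<^esub> E [^]\<^bsub>Q\<^esub> n"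
      by simp
    have l1: "pf (pb (X1 \<oplus> X2) \<otimes>\<^bsub>Q\<^esub> E [^]\<^bsub>Q\<^esub> (Suc n)) = (X1 \<oplus> X2) \<otimes> pf (E [^]\<^bsub>Q\<^esub> (Suc n))"
      by (rule pflin) (use cl in auto)
    have l2: "pf (pb (X1 \<otimes> X2) \<otimes>\<^bsub>Q\<^esub> E [^]\<^bsub>Q\<^esub> n) = (X1 \<otimes> X2) \<otimes> pf (E [^]\<^bsub>Q\<^esub> n)"
      by (rule pflin) (use cl in auto)
    have l3: "pf (pb (X1 \<oplus> X2) \<otimes>\<^bsub>Q\<^esub> E [^]\<^bsub>Q\<^esub> (Suc n) \<ominus>\<^bsub>Q\<^esub> pb (X1 \<otimes> X2) \<otimes>\<^bsub>Q\<^esub> E [^]\<^bsub>Q\<^esub> n)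
       = pf (pb (X1 \<oplus> X2) \<otimes>\<^bsub>Q\<^esub> E [^]\<^bsub>Q\<^esub> (Suc n)) \<ominus> pf (pb (X1 \<otimes> X2) \<otimes>\<^bsub>Q\<^esub> E [^]\<^bsub>Q\<^esub> n)"
      by (rule pfminus) (use cl in auto)
    show ?thesis unfolding e l3 l1 l2 ..
  qed
  have A2: "A \<otimes>\<^bsub>Q\<^esub> A \<otimes>\<^bsub>Q\<^esub> pb (\<one> \<ominus> c \<otimes> X2) = A \<otimes>\<^bsub>Q\<^esub> pb (X1 \<ominus> X2)"
  proof -
    have "A \<otimes>\<^bsub>Q\<^esub> pb (X1 \<ominus> X2) = A \<otimes>\<^bsub>Q\<^esub> A \<oplus>\<^bsub>Q\<^esub> A \<otimes>\<^bsub>Q\<^esub> E \<ominus>\<^bsub>Q\<^esub> pb c \<otimes>\<^bsub>Q\<^esub> A \<otimes>\<^bsub>Q\<^esub> (A \<otimes>\<^bsub>Q\<^esub> E) \<ominus>\<^bsub>Q\<^esub> A \<otimes>\<^bsub>Q\<^esub> pb X2"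
      unfolding pbd pb1 using cl by algebra
    also have "\<dots> = A \<otimes>\<^bsub>Q\<^esub> A \<oplus>\<^bsub>Q\<^esub> A \<otimes>\<^bsub>Q\<^esub> pb X2 \<ominus>\<^bsub>Q\<^esub> pb c \<otimes>\<^bsub>Q\<^esub> A \<otimes>\<^bsub>Q\<^esub> (A \<otimes>\<^bsub>Q\<^esub> pb X2) \<ominus>\<^bsub>Q\<^esub> A \<otimes>\<^bsub>Q\<^esub> pb X2"
      unfolding AE ..
    also have "\<dots> = A \<otimes>\<^bsub>Q\<^esub> A \<ominus>\<^bsub>Q\<^esub> A \<otimes>\<^bsub>Q\<^esub> A \<otimes>\<^bsub>Q\<^esub> (pb c \<otimes>\<^bsub>Q\<^esub> pb X2)"
      using cl by algebra
    also have "\<dots> = A \<otimes>\<^bsub>Q\<^esub> A \<otimes>\<^bsub>Q\<^esub> (\<one>\<^bsub>Q\<^esub> \<ominus>\<^bsub>Q\<^esub> pb c \<otimes>\<^bsub>Q\<^esub> pb X2)"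
      using cl by (simp add: a_minus_def Q.r_distr Q.r_minus)
    finally show ?thesis unfolding pbu by simp
  qed
  have ApE: "A [^]\<^bsub>Q\<^esub> (Suc k) \<otimes>\<^bsub>Q\<^esub> E = A [^]\<^bsub>Q\<^esub> (Suc k) \<otimes>\<^bsub>Q\<^esub> pb X2" for k :: nat
    using cl Q.nat_pow_closed[of A k] by (simp add: Q.m_assoc AE)
  have ApEt: "A [^]\<^bsub>Q\<^esub> (Suc k) \<otimes>\<^bsub>Q\<^esub> E [^]\<^bsub>Q\<^esub> t = pb (X2 [^] t) \<otimes>\<^bsub>Q\<^esub> A [^]\<^bsub>Q\<^esub> (Suc k)" for k t :: nat
  proof (induction t)
    case 0
    then show ?case using cl Q.nat_pow_closed[of A "Suc k"] by (simp del: Q.nat_pow_Suc)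
  next
    case (Suc t)
    have "A [^]\<^bsub>Q\<^esub> (Suc k) \<otimes>\<^bsub>Q\<^esub> E [^]\<^bsub>Q\<^esub> (Suc t) = (A [^]\<^bsub>Q\<^esub> (Suc k) \<otimes>\<^bsub>Q\<^esub> E [^]\<^bsub>Q\<^esub> t) \<otimes>\<^bsub>Q\<^esub> E"
      using cl Q.nat_pow_closed[of A "Suc k"] Q.nat_pow_closed[of E t]
      by (simp only: Q.nat_pow_Suc[of E t] Q.m_assoc)
    also have "\<dots> = pb (X2 [^] t) \<otimes>\<^bsub>Q\<^esub> (A [^]\<^bsub>Q\<^esub> (Suc k) \<otimes>\<^bsub>Q\<^esub> E)"
      unfolding Suc using cl Q.nat_pow_closed[of A "Suc k"] P.nat_pow_closed[of X2 t]
      by (simp only: Q.m_assoc h.hom_closed)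
    also have "\<dots> = pb (X2 [^] t) \<otimes>\<^bsub>Q\<^esub> (A [^]\<^bsub>Q\<^esub> (Suc k) \<otimes>\<^bsub>Q\<^esub> pb X2)" unfolding ApE ..
    also have "\<dots> = pb (X2 [^] (Suc t)) \<otimes>\<^bsub>Q\<^esub> A [^]\<^bsub>Q\<^esub> (Suc k)"
      using cl Q.nat_pow_closed[of A "Suc k"] P.nat_pow_closed[of X2 t] h.hom_closed[of "X2 [^] t"]
      by (simp del: Q.nat_pow_Suc add: Q.m_ac)
    finally show ?case .
  qed
  have Ap: "A [^]\<^bsub>Q\<^esub> (Suc (Suc k)) \<otimes>\<^bsub>Q\<^esub> pb (\<one> \<ominus> c \<otimes> X2) = A [^]\<^bsub>Q\<^esub> (Suc k) \<otimes>\<^bsub>Q\<^esub> pb (X1 \<ominus> X2)" for k :: nat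
  proof -
    have c2: "pb (\<one> \<ominus> c \<otimes> X2) \<in> carrier Q" "pb (X1 \<ominus> X2) \<in> carrier Q" using cl by auto
    have "A [^]\<^bsub>Q\<^esub> (Suc (Suc k)) \<otimes>\<^bsub>Q\<^esub> pb (\<one> \<ominus> c \<otimes> X2) = A [^]\<^bsub>Q\<^esub> k \<otimes>\<^bsub>Q\<^esub> (A \<otimes>\<^bsub>Q\<^esub> A \<otimes>\<^bsub>Q\<^esub> pb (\<one> \<ominus> c \<otimes> X2))"
      using cl c2 Q.nat_pow_closed[of A k] by (simp add: Q.m_assoc)
    also have "\<dots> = A [^]\<^bsub>Q\<^esub> (Suc k) \<otimes>\<^bsub>Q\<^esub> pb (X1 \<ominus> X2)"
      unfolding A2 using cl c2 Q.nat_pow_closed[of A k] by (simp add: Q.m_assoc)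
    finally show ?thesis .
  qed
  show "pf (A [^]\<^bsub>Q\<^esub> s \<otimes>\<^bsub>Q\<^esub> E [^]\<^bsub>Q\<^esub> t) = X1 \<otimes> (X2 [^] t \<otimes> D [^] (s - 1))"
    if D: "D \<in> carrier P" and W: "W \<in> carrier P" and Du: "D \<otimes> (\<one> \<ominus> c \<otimes> X2) = X1 \<ominus> X2"
      and Wu: "W \<otimes> (\<one> \<ominus> c \<otimes> X2) = \<one>" and s: "1 \<le> s" for s t :: nat and D W
  proof -
    have uc: "\<one> \<ominus> c \<otimes> X2 \<in> carrier P" "X1 \<ominus> X2 \<in> carrier P" using cl by auto
    have pfAk: "pf (A [^]\<^bsub>Q\<^esub> (Suc k)) = X1 \<otimes> D [^] k" for k :: nat
    proof (induction k)
      case 0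
      then show ?case using cl by (simp add: pfA)
    next
      case (Suc k)
      have cA: "pf (A [^]\<^bsub>Q\<^esub> (Suc (Suc k))) \<in> carrier P"
        using pfc Q.nat_pow_closed cl by blast
      have "(\<one> \<ominus> c \<otimes> X2) \<otimes> pf (A [^]\<^bsub>Q\<^esub> (Suc (Suc k))) = (X1 \<ominus> X2) \<otimes> pf (A [^]\<^bsub>Q\<^esub> (Suc k))"
        using pflin'[of "\<one> \<ominus> c \<otimes> X2" "A [^]\<^bsub>Q\<^esub> (Suc (Suc k))"] pflin'[of "X1 \<ominus> X2" "A [^]\<^bsub>Q\<^esub> (Suc k)"]
          Ap[of k] uc cl Q.nat_pow_closed by metis
      also have "\<dots> = (D \<otimes> (\<one> \<ominus> c \<otimes> X2)) \<otimes> (X1 \<otimes> D [^] k)" unfolding Suc Du ..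
      finally have e: "(\<one> \<ominus> c \<otimes> X2) \<otimes> pf (A [^]\<^bsub>Q\<^esub> (Suc (Suc k))) = D \<otimes> (\<one> \<ominus> c \<otimes> X2) \<otimes> (X1 \<otimes> D [^] k)" .
      have "pf (A [^]\<^bsub>Q\<^esub> (Suc (Suc k))) = W \<otimes> ((\<one> \<ominus> c \<otimes> X2) \<otimes> pf (A [^]\<^bsub>Q\<^esub> (Suc (Suc k))))"
        using cA uc W by (simp add: P.m_assoc[symmetric] Wu)
      also have "\<dots> = (W \<otimes> (\<one> \<ominus> c \<otimes> X2)) \<otimes> (X1 \<otimes> (D [^] k \<otimes> D))"
        unfolding e using uc W D cl P.nat_pow_closed[of D k] by (simp add: P.m_ac)
      also have "\<dots> = X1 \<otimes> D [^] (Suc k)" unfolding Wu using D cl P.nat_pow_closed[of D k] by simp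
      finally show ?case .
    qed
    obtain k where k: "s = Suc k" using s by (cases s) auto
    have "pf (A [^]\<^bsub>Q\<^esub> s \<otimes>\<^bsub>Q\<^esub> E [^]\<^bsub>Q\<^esub> t) = X2 [^] t \<otimes> pf (A [^]\<^bsub>Q\<^esub> s)"
      unfolding k ApEt by (rule pflin) (use cl in auto)
    also have "\<dots> = X1 \<otimes> (X2 [^] t \<otimes> D [^] (s - 1))"
      unfolding k pfAk using cl D P.nat_pow_closed by (simp add: P.m_lcomm)
    finally show ?thesis .
  qed
qed

lemma G_rec:
  fixes P (structure)
  assumes P: "cring P" and cs: "X1 \<in> carrier P" "X2 \<in> carrier P"
  shows "(\<Oplus>i\<in>{1..Suc m}. X1 [^] (Suc m + 1 - i) \<otimes> X2 [^] i) =
         X1 \<otimes> (\<Oplus>i\<in>{1..m}. X1 [^] (m + 1 - i) \<otimes> X2 [^] i) \<oplus> X1 \<otimes> X2 [^] (Suc m)"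
proof -
  interpret P: cring P by (rule P)
  have fc: "(\<lambda>i. X1 [^] (k + 1 - i) \<otimes> X2 [^] (i::nat)) \<in> A \<rightarrow> carrier P" for k A using cs by auto
  have "{1..Suc m} = insert (Suc m) {1..m}" by auto
  then have "(\<Oplus>i\<in>{1..Suc m}. X1 [^] (Suc m + 1 - i) \<otimes> X2 [^] i) =
      X1 [^] (Suc m + 1 - Suc m) \<otimes> X2 [^] (Suc m) \<oplus> (\<Oplus>i\<in>{1..m}. X1 [^] (Suc m + 1 - i) \<otimes> X2 [^] i)"
    using fc cs by (simp add: P.finsum_insert del: P.nat_pow_Suc)
  also have "(\<Oplus>i\<in>{1..m}. X1 [^] (Suc m + 1 - i) \<otimes> X2 [^] i) = (\<Oplus>i\<in>{1..m}. X1 \<otimes> (X1 [^] (m + 1 - i) \<otimes> X2 [^] i))"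
  proof (rule P.finsum_cong')
    show "(\<lambda>i. X1 \<otimes> (X1 [^] (m + 1 - i) \<otimes> X2 [^] i)) \<in> {1..m} \<rightarrow> carrier P" using cs by auto
    fix i assume "i \<in> {1..m}"
    then have "Suc m + 1 - i = Suc (m + 1 - i)" by auto
    then show "X1 [^] (Suc m + 1 - i) \<otimes> X2 [^] i = X1 \<otimes> (X1 [^] (m + 1 - i) \<otimes> X2 [^] i)"
      using cs by (simp add: P.m_ac)
  qed simp
  also have "\<dots> = X1 \<otimes> (\<Oplus>i\<in>{1..m}. X1 [^] (m + 1 - i) \<otimes> X2 [^] i)"
    using cs fc by (simp add: P.finsum_rdistr)
  finally show ?thesis using cs P.finsum_closed[OF fc] by (simp add: P.a_comm)
qed

lemma closed_form:
  fixes P (structure)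
  assumes P: "cring P" and cs: "X1 \<in> carrier P" "X2 \<in> carrier P" "c \<in> carrier P"
    and p0: "p 0 = \<one>" and p1: "p 1 = c \<otimes> (X1 \<otimes> X2)"
    and prec: "\<And>n. p (Suc (Suc n)) = (X1 \<oplus> X2) \<otimes> p (Suc n) \<ominus> (X1 \<otimes> X2) \<otimes> p n"
    and pc: "\<And>n. p n \<in> carrier P"
  shows "p (Suc n) = c \<otimes> (\<Oplus>i\<in>{1..Suc n}. X1 [^] (Suc n + 1 - i) \<otimes> X2 [^] i) \<ominus> (\<Oplus>i\<in>{1..n}. X1 [^] (n + 1 - i) \<otimes> X2 [^] i)"
proof -
  interpret P: cring P by (rule P)
  define G where "G m = (\<Oplus>i\<in>{1..m}. X1 [^] (m + 1 - i) \<otimes> X2 [^] (i::nat))" for m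
  have Gc: "G m \<in> carrier P" for m unfolding G_def using cs by (intro P.finsum_closed) auto
  have GS: "G (Suc m) = X1 \<otimes> G m \<oplus> X1 \<otimes> X2 [^] (Suc m)" for m
    unfolding G_def by (rule G_rec[OF P cs(1,2)])
  have G0: "G 0 = \<zero>" unfolding G_def by simp
  have G1: "G (Suc 0) = X1 \<otimes> X2" using GS[of 0] cs by (simp add: G0)
  have Grec: "G (Suc (Suc m)) = (X1 \<oplus> X2) \<otimes> G (Suc m) \<ominus> (X1 \<otimes> X2) \<otimes> G m" for m
  proof -
    have "(X1 \<oplus> X2) \<otimes> G (Suc m) \<ominus> (X1 \<otimes> X2) \<otimes> G m =
       X1 \<otimes> G (Suc m) \<oplus> X2 \<otimes> (X1 \<otimes> G m \<oplus> X1 \<otimes> X2 [^] (Suc m)) \<ominus> (X1 \<otimes> X2) \<otimes> G m"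
      unfolding GS[of m] using cs Gc[of m] Gc[of "Suc m"] P.nat_pow_closed[of X2 "Suc m"] by algebra
    also have "\<dots> = X1 \<otimes> G (Suc m) \<oplus> X1 \<otimes> (X2 [^] (Suc m) \<otimes> X2)"
      using cs Gc[of m] Gc[of "Suc m"] P.nat_pow_closed[of X2 "Suc m"] by algebra
    also have "\<dots> = G (Suc (Suc m))" using GS[of "Suc m"] by simp
    finally show ?thesis by simp
  qed
  have main: "p (Suc n) = c \<otimes> G (Suc n) \<ominus> G n \<and> p (Suc (Suc n)) = c \<otimes> G (Suc (Suc n)) \<ominus> G (Suc n)"
  proof (induction n)
    case 0
    have "p 2 = (X1 \<oplus> X2) \<otimes> (c \<otimes> (X1 \<otimes> X2)) \<ominus> (X1 \<otimes> X2) \<otimes> \<one>"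
      using prec[of 0] by (simp add: p0 p1[simplified] numeral_2_eq_2)
    also have "\<dots> = c \<otimes> (X1 \<otimes> (X1 \<otimes> X2) \<oplus> X1 \<otimes> (X2 \<otimes> X2)) \<ominus> X1 \<otimes> X2"
      using cs by algebra
    also have "\<dots> = c \<otimes> G 2 \<ominus> G 1"
      using GS[of 1] cs by (simp add: G1 numeral_2_eq_2)
    finally show ?case using p1 G1 G0 cs by (simp add: numeral_2_eq_2 a_minus_def)
  next
    case (Suc n)
    have "p (Suc (Suc (Suc n))) = (X1 \<oplus> X2) \<otimes> (c \<otimes> G (Suc (Suc n)) \<ominus> G (Suc n)) \<ominus> (X1 \<otimes> X2) \<otimes> (c \<otimes> G (Suc n) \<ominus> G n)"
      using prec[of "Suc n"] Suc by simp
    also have "\<dots> = c \<otimes> ((X1 \<oplus> X2) \<otimes> G (Suc (Suc n)) \<ominus> (X1 \<otimes> X2) \<otimes> G (Suc n)) \<ominus> ((X1 \<oplus> X2) \<otimes> G (Suc n) \<ominus> (X1 \<otimes> X2) \<otimes> G n)"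
      using cs Gc[of n] Gc[of "Suc n"] Gc[of "Suc (Suc n)"] by algebra
    also have "\<dots> = c \<otimes> G (Suc (Suc (Suc n))) \<ominus> G (Suc (Suc n))" by (simp only: Grec)
    finally show ?case using Suc by simp
  qed
  then show ?thesis unfolding G_def by simp
qed

lemma unit_lem:
  fixes P (structure)
  assumes P: "cring P" and cs: "Xa \<in> carrier P" "Xb \<in> carrier P" "c \<in> carrier P" "h \<in> carrier P"
    and K: "h \<ominus> c \<otimes> (Xb \<otimes> h) = \<ominus> Xb"
  shows "(Xa \<oplus> h \<ominus> c \<otimes> (Xa \<otimes> h)) \<otimes> (\<one> \<ominus> c \<otimes> Xb) = Xa \<ominus> Xb"
    and "(\<one> \<ominus> c \<otimes> h) \<otimes> (\<one> \<ominus> c \<otimes> Xb) = \<one>"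
proof -
  interpret P: cring P by (rule P)
  have "(Xa \<oplus> h \<ominus> c \<otimes> (Xa \<otimes> h)) \<otimes> (\<one> \<ominus> c \<otimes> Xb) =
     Xa \<otimes> (\<one> \<ominus> c \<otimes> Xb) \<oplus> (h \<ominus> c \<otimes> (Xb \<otimes> h)) \<ominus> c \<otimes> Xa \<otimes> (h \<ominus> c \<otimes> (Xb \<otimes> h))"
    using cs by algebra
  also have "\<dots> = Xa \<otimes> (\<one> \<ominus> c \<otimes> Xb) \<oplus> \<ominus> Xb \<ominus> c \<otimes> Xa \<otimes> \<ominus> Xb" unfolding K ..
  also have "\<dots> = Xa \<ominus> Xb" using cs by algebra
  finally show "(Xa \<oplus> h \<ominus> c \<otimes> (Xa \<otimes> h)) \<otimes> (\<one> \<ominus> c \<otimes> Xb) = Xa \<ominus> Xb" .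
  have "(\<one> \<ominus> c \<otimes> h) \<otimes> (\<one> \<ominus> c \<otimes> Xb) = \<one> \<ominus> c \<otimes> Xb \<ominus> c \<otimes> (h \<ominus> c \<otimes> (Xb \<otimes> h))"
    using cs by algebra
  also have "\<dots> = \<one> \<ominus> c \<otimes> Xb \<ominus> c \<otimes> \<ominus> Xb" unfolding K ..
  also have "\<dots> = \<one>" using cs by algebra
  finally show "(\<one> \<ominus> c \<otimes> h) \<otimes> (\<one> \<ominus> c \<otimes> Xb) = \<one>" .
qed



lemma mult_eq: "mps_mult = mult (mps V)" and add_eq: "(+) = add (mps V)"
  by (simp_all add: mps_def)

declare mps_simps[simp del]

lemma (in ring_hom_cring) hom_minus': "x \<in> carrier R \<Longrightarrow> y \<in> carrier R \<Longrightarrow> h (x \<ominus> y) = h x \<ominus>\<^bsub>S\<^esub> h y"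
  by (simp add: a_minus_def)

lemma (in ring_hom_cring) hom_pow': "x \<in> carrier R \<Longrightarrow> h (x [^] (n::nat)) = h x [^]\<^bsub>S\<^esub> n"
  by (induction n) auto

lemma uminus_mps: assumes "g \<in> carrier (mps V)"
  shows "- g = \<ominus>\<^bsub>(mps V :: (('v \<Rightarrow> nat) \<Rightarrow> 'r::comm_ring_1) ring)\<^esub> g"
proof -
  interpret cring "mps V :: (('v \<Rightarrow> nat) \<Rightarrow> 'r) ring" by (rule cring_mps)
  have ng: "- g \<in> carrier (mps V)" using assms by (auto simp: carrier_mps)
  show ?thesis
    by (rule minus_equality[symmetric]) (use assms ng in \<open>auto simp: fun_eq_iff mps_simps\<close>)
qed

lemma fgl_conv:
  fixes x y :: "('v \<Rightarrow> nat) \<Rightarrow> 'r::comm_ring_1" and S (structure)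
  assumes h: "ring_hom_cring (mps V) S h" and xy: "x \<in> carrier (mps V)" "y \<in> carrier (mps V)"
  shows "h (fgl_add v x y) = h x \<oplus> h y \<ominus> h (mps_const v) \<otimes> (h x \<otimes> h y)"
proof -
  interpret h: ring_hom_cring "mps V" S h by (rule h)
  have m: "mps_mult x y \<in> carrier (mps V)" using xy by (rule mult_closed)
  have c1: "x + y \<in> carrier (mps V)" using h.R.add.m_closed[OF xy] by (simp add: mps_simps)
  have c2: "mps_smult v (mps_mult x y) \<in> carrier (mps V)"
    using mult_closed[OF const_closed m] const_mult_mps[OF m] by simp
  have "fgl_add v x y = (x + y) - mps_smult v (mps_mult x y)" by (simp add: fgl_add_def)
  also have "\<dots> = (x + y) \<ominus>\<^bsub>mps V\<^esub> mps_smult v (mps_mult x y)" by (rule minus_mps[OF c1 c2])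
  also have "\<dots> = x \<oplus>\<^bsub>mps V\<^esub> y \<ominus>\<^bsub>mps V\<^esub> mps_const v \<otimes>\<^bsub>mps V\<^esub> (x \<otimes>\<^bsub>mps V\<^esub> y)"
    by (simp add: smult_mps[OF m] mps_simps)
  finally have "fgl_add v x y = x \<oplus>\<^bsub>mps V\<^esub> y \<ominus>\<^bsub>mps V\<^esub> mps_const v \<otimes>\<^bsub>mps V\<^esub> (x \<otimes>\<^bsub>mps V\<^esub> y)" .
  then show ?thesis using xy const_closed[of v V] by (simp add: h.hom_minus' h.R.add.m_closed h.R.m_closed)
qed

lemma sum_conv:
  fixes x1 x2 :: "('v \<Rightarrow> nat) \<Rightarrow> 'r::comm_ring_1" and S (structure)
  assumes h: "ring_hom_cring (mps V) S h" and xs: "x1 \<in> carrier (mps V)" "x2 \<in> carrier (mps V)"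
  shows "h (\<Sum>i\<in>I. mps_mult (mps_pow x1 (k i)) (mps_pow x2 (l i))) = (\<Oplus>i\<in>I. h x1 [^] (k i :: nat) \<otimes> h x2 [^] (l i :: nat))"
proof -
  interpret h: ring_hom_cring "mps V" S h by (rule h)
  have fc: "(\<lambda>i. mps_mult (mps_pow x1 (k i)) (mps_pow x2 (l i))) \<in> I \<rightarrow> carrier (mps V)"
    using xs by (auto simp: pow_mps intro!: mult_closed h.R.nat_pow_closed)
  have "h (\<Sum>i\<in>I. mps_mult (mps_pow x1 (k i)) (mps_pow x2 (l i))) = (\<Oplus>i\<in>I. h (mps_mult (mps_pow x1 (k i)) (mps_pow x2 (l i))))"
    unfolding sum_mps[OF fc] using fc by (simp add: comp_def)
  also have "\<dots> = (\<Oplus>i\<in>I. h x1 [^] (k i :: nat) \<otimes> h x2 [^] (l i :: nat))"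
    by (rule h.S.finsum_cong') (use xs in \<open>auto simp: pow_mps h.hom_pow' mult_eq[of V]\<close>)
  finally show ?thesis .
qed

lemma fgl_add_closed:
  assumes x: "x \<in> carrier (mps V)" and y: "y \<in> carrier (mps V)"
  shows "(fgl_add v x y :: ('v \<Rightarrow> nat) \<Rightarrow> 'r::comm_ring_1) \<in> carrier (mps V)"
proof -
  have m: "mps_mult x y \<in> carrier (mps V)" by (rule mult_closed[OF x y])
  have "fgl_add v x y \<alpha> = 0" if "\<alpha> \<notin> MS V" for \<alpha>
  proof -
    have "x \<alpha> = 0" "y \<alpha> = 0" "mps_mult x y \<alpha> = 0" using x y m that unfolding carrier_mps by blast+
    then show ?thesis by (simp add: fgl_add_def mps_smult_def)
  qed
  then show ?thesis unfolding carrier_mps by blast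
qed

lemma fan_facts:
  fixes Fan :: "('d::finite \<Rightarrow> int) set set"
  assumes fan: "smooth_fan Fan" and sigma: "{r1, r2} \<in> Fan" "r1 \<noteq> r2"
  shows "finite (rays Fan)" "finite (rays (star_subdivision Fan {r1, r2}))"
    "r1 \<in> rays Fan" "r2 \<in> rays Fan" "rays Fan \<subseteq> rays (star_subdivision Fan {r1, r2})"
    "r1 + r2 \<in> rays (star_subdivision Fan {r1, r2})"
    "\<forall>\<theta>\<in>star_subdivision Fan {r1, r2}. \<not> {r1, r2} \<subseteq> \<theta>"
proof -
  have fin: "finite Fan" and cl: "\<And>\<theta> \<tau>. \<theta> \<in> Fan \<Longrightarrow> \<tau> \<subseteq> \<theta> \<Longrightarrow> \<tau> \<in> Fan"
    using fan unfolding smooth_fan_def by blast+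
  have sg: "(\<Sum>w\<in>{r1, r2}. w) = r1 + r2" using sigma(2) by simp
  have "(\<lambda>\<rho>. {\<rho>}) ` rays Fan \<subseteq> Fan" by (auto simp: rays_def)
  moreover have "inj_on (\<lambda>\<rho>. {\<rho>}) (rays Fan)" by (auto simp: inj_on_def)
  ultimately show f1: "finite (rays Fan)" using fin by (meson finite_imageD finite_subset)
  show "r1 \<in> rays Fan" "r2 \<in> rays Fan" using cl[OF sigma(1)] by (auto simp: rays_def)
  show "rays Fan \<subseteq> rays (star_subdivision Fan {r1, r2})"
    using sigma(2) by (auto simp: rays_def star_subdivision_def)
  show "r1 + r2 \<in> rays (star_subdivision Fan {r1, r2})"
    unfolding rays_def star_subdivision_def sg using sigma by auto
  have "rays (star_subdivision Fan {r1, r2}) \<subseteq> insert (r1 + r2) (rays Fan)"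
  proof
    fix \<rho> assume "\<rho> \<in> rays (star_subdivision Fan {r1, r2})"
    then have "{\<rho>} \<in> star_subdivision Fan {r1, r2}" by (simp add: rays_def)
    then have "{\<rho>} \<in> Fan \<or> (\<exists>\<theta>\<in>Fan. {\<rho>} \<subseteq> insert (r1 + r2) \<theta>)"
      unfolding star_subdivision_def sg by blast
    then show "\<rho> \<in> insert (r1 + r2) (rays Fan)"
      using cl by (auto simp: rays_def)
  qed
  then show "finite (rays (star_subdivision Fan {r1, r2}))" using f1 finite_subset by blast
  show "\<forall>\<theta>\<in>star_subdivision Fan {r1, r2}. \<not> {r1, r2} \<subseteq> \<theta>"
    unfolding star_subdivision_def by blast
qed

lemma D_facts:
  fixes S (structure)
  assumes h: "ring_hom_cring (mps V :: (('v \<Rightarrow> nat) \<Rightarrow> 'r::comm_ring_1) ring) S h" and ab: "a \<in> V" "b \<in> V"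
  shows "h (fgl_sub_var v a b) \<in> carrier S"
    and "h (fgl_sub_var v a b) \<otimes> (\<one> \<ominus> h (mps_const v) \<otimes> h (mvar b)) = h (mvar a) \<ominus> h (mvar b)"
    and "(\<one> \<ominus> h (mps_const v) \<otimes> h (fgl_inv_var v b)) \<otimes> (\<one> \<ominus> h (mps_const v) \<otimes> h (mvar b)) = \<one>"
    and "\<one> \<ominus> h (mps_const v) \<otimes> h (fgl_inv_var v b) \<in> carrier S"
proof -
  interpret h: ring_hom_cring "mps V :: (('v \<Rightarrow> nat) \<Rightarrow> 'r) ring" S h by (rule h)
  have xa: "(mvar a :: ('v \<Rightarrow> nat) \<Rightarrow> 'r) \<in> carrier (mps V)" by (rule mvar_closed[OF ab(1)])
  have xb: "(mvar b :: ('v \<Rightarrow> nat) \<Rightarrow> 'r) \<in> carrier (mps V)" by (rule mvar_closed[OF ab(2)])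
  have ch: "(fgl_inv_var v b :: ('v \<Rightarrow> nat) \<Rightarrow> 'r) \<in> carrier (mps V)" by (rule inv_closed[OF ab(2)])
  have cv: "(mps_const v :: ('v \<Rightarrow> nat) \<Rightarrow> 'r) \<in> carrier (mps V)" by (rule const_closed)
  have m: "mps_mult (mvar b) (fgl_inv_var v b) \<in> carrier (mps V)" using mult_closed[OF xb ch] .
  have sm: "mps_smult v (mps_mult (mvar b) (fgl_inv_var v b)) \<in> carrier (mps V)"
    using mult_closed[OF cv m] const_mult_mps[OF m] by simp
  have e1: "fgl_inv_var v b - mps_smult v (mps_mult (mvar b) (fgl_inv_var v b)) =
      fgl_inv_var v b \<ominus>\<^bsub>mps V\<^esub> mps_smult v (mps_mult (mvar b) (fgl_inv_var v b))" by (rule minus_mps[OF ch sm])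
  have e2: "mps_smult v (mps_mult (mvar b) (fgl_inv_var v b)) = mps_const v \<otimes>\<^bsub>mps V\<^esub> (mvar b \<otimes>\<^bsub>mps V\<^esub> (fgl_inv_var v b :: ('v \<Rightarrow> nat) \<Rightarrow> 'r))"
    by (simp add: smult_mps[OF m] mps_simps)
  have "h (fgl_inv_var v b \<ominus>\<^bsub>mps V\<^esub> mps_const v \<otimes>\<^bsub>mps V\<^esub> (mvar b \<otimes>\<^bsub>mps V\<^esub> fgl_inv_var v b)) = h (\<ominus>\<^bsub>mps V\<^esub> mvar b)"
  proof -
    have "fgl_inv_var v b \<ominus>\<^bsub>mps V\<^esub> mps_const v \<otimes>\<^bsub>mps V\<^esub> (mvar b \<otimes>\<^bsub>mps V\<^esub> fgl_inv_var v b) = \<ominus>\<^bsub>mps V\<^esub> (mvar b :: ('v \<Rightarrow> nat) \<Rightarrow> 'r)"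
      using inv_identity[OF ab(2), of v] unfolding e1 unfolding e2 uminus_mps[OF xb] .
    then show ?thesis by simp
  qed
  then have K: "h (fgl_inv_var v b) \<ominus>\<^bsub>S\<^esub> h (mps_const v) \<otimes>\<^bsub>S\<^esub> (h (mvar b) \<otimes>\<^bsub>S\<^esub> h (fgl_inv_var v b)) = \<ominus>\<^bsub>S\<^esub> h (mvar b)"
    using ch xb cv by (simp add: h.hom_minus' h.R.m_closed)
  have D: "h (fgl_sub_var v a b) = h (mvar a) \<oplus>\<^bsub>S\<^esub> h (fgl_inv_var v b) \<ominus>\<^bsub>S\<^esub> h (mps_const v) \<otimes>\<^bsub>S\<^esub> (h (mvar a) \<otimes>\<^bsub>S\<^esub> h (fgl_inv_var v b))"
    unfolding fgl_sub_var_def by (rule fgl_conv[OF h xa ch])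
  note u = unit_lem[OF h.S.is_cring h.hom_closed[OF xa] h.hom_closed[OF xb] h.hom_closed[OF cv] h.hom_closed[OF ch] K]
  show "h (fgl_sub_var v a b) \<otimes> (\<one> \<ominus> h (mps_const v) \<otimes> h (mvar b)) = h (mvar a) \<ominus> h (mvar b)"
    unfolding D by (rule u(1))
  show "(\<one> \<ominus> h (mps_const v) \<otimes> h (fgl_inv_var v b)) \<otimes> (\<one> \<ominus> h (mps_const v) \<otimes> h (mvar b)) = \<one>"
    by (rule u(2))
  show "h (fgl_sub_var v a b) \<in> carrier S"
    unfolding D using h.hom_closed[OF xa] h.hom_closed[OF cv] h.hom_closed[OF ch] by simp
  show "\<one> \<ominus> h (mps_const v) \<otimes> h (fgl_inv_var v b) \<in> carrier S"
    using h.hom_closed[OF cv] h.hom_closed[OF ch] by simp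
qed



theorem theorem5p1:
  fixes Fan :: "('d::finite \<Rightarrow> int) set set"
    and r1 r2 :: "'d \<Rightarrow> int"
    and v :: "'r::comm_ring_1"
    and pb pf :: "((('d \<Rightarrow> int) \<Rightarrow> nat) \<Rightarrow> 'r) set \<Rightarrow> ((('d \<Rightarrow> int) \<Rightarrow> nat) \<Rightarrow> 'r) set"
  assumes fan: "smooth_fan Fan"
    and sigma: "{r1, r2} \<in> Fan" "r1 \<noteq> r2"
    and pb_hom: "pb \<in> ring_hom (face_ring Fan) (face_ring (star_subdivision Fan {r1, r2}))"
    and pb_alg: "\<forall>r. pb (cls Fan (mps_const r)) = cls (star_subdivision Fan {r1, r2}) (mps_const r)"
    and pb_out: "\<forall>\<rho>\<in>rays Fan - {r1, r2}.
                   pb (cls Fan (mvar \<rho>)) = cls (star_subdivision Fan {r1, r2}) (mvar \<rho>)"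
    and pb_in: "\<forall>\<rho>\<in>{r1, r2}.
                   pb (cls Fan (mvar \<rho>)) =
                   cls (star_subdivision Fan {r1, r2}) (fgl_add v (mvar \<rho>) (mvar (r1 + r2)))"
    and pf_fun: "pf \<in> carrier (face_ring (star_subdivision Fan {r1, r2})) \<rightarrow> carrier (face_ring Fan)"
    and pf_add: "\<forall>a\<in>carrier (face_ring (star_subdivision Fan {r1, r2})).
                 \<forall>b\<in>carrier (face_ring (star_subdivision Fan {r1, r2})).
                   pf (a \<oplus>\<^bsub>face_ring (star_subdivision Fan {r1, r2})\<^esub> b) =
                   pf a \<oplus>\<^bsub>face_ring Fan\<^esub> pf b"
    and pf_lin: "\<forall>a\<in>carrier (face_ring Fan).
                 \<forall>b\<in>carrier (face_ring (star_subdivision Fan {r1, r2})).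
                   pf (pb a \<otimes>\<^bsub>face_ring (star_subdivision Fan {r1, r2})\<^esub> b) =
                   a \<otimes>\<^bsub>face_ring Fan\<^esub> pf b"
    and pf_one: "pf \<one>\<^bsub>face_ring (star_subdivision Fan {r1, r2})\<^esub> = \<one>\<^bsub>face_ring Fan\<^esub>"
    and pf_var: "\<forall>\<rho>\<in>rays Fan.
                   pf (cls (star_subdivision Fan {r1, r2}) (mvar \<rho>)) = cls Fan (mvar \<rho>)"
  shows "pf (cls (star_subdivision Fan {r1, r2}) (mvar (r1 + r2))) =
           cls Fan (mps_smult v (mps_mult (mvar r1) (mvar r2)))
       \<and> (\<forall>n::nat. n \<ge> 2 \<longrightarrow>
            pf (cls (star_subdivision Fan {r1, r2}) (mps_pow (mvar (r1 + r2)) n)) =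
            cls Fan (mps_smult v (\<Sum>i=1..n. mps_mult (mps_pow (mvar r1) (n + 1 - i)) (mps_pow (mvar r2) i))
                     - (\<Sum>i=1..n-1. mps_mult (mps_pow (mvar r1) (n - i)) (mps_pow (mvar r2) i))))
       \<and> (\<forall>a b (s::nat) (t::nat). {a, b} = {r1, r2} \<and> a \<noteq> b \<and> s \<ge> 1 \<longrightarrow>
            pf (cls (star_subdivision Fan {r1, r2})
                  (mps_mult (mps_pow (mvar a) s) (mps_pow (mvar (r1 + r2)) t))) =
            cls Fan (mps_mult (mvar a) (mps_mult (mps_pow (mvar b) t)
                        (mps_pow (fgl_sub_var v a b) (s - 1)))))"
proof -
  let ?F' = "star_subdivision Fan {r1, r2}"
  let ?P = "face_ring Fan :: ((('d \<Rightarrow> int) \<Rightarrow> nat) \<Rightarrow> 'r) set ring"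
  let ?Q = "face_ring ?F' :: ((('d \<Rightarrow> int) \<Rightarrow> nat) \<Rightarrow> 'r) set ring"
  note ff = fan_facts[OF fan sigma]
  have hP: "ring_hom_cring (mps (rays Fan)) ?P (cls Fan)" by (rule face_facts(3)[OF ff(1)])
  have hQ: "ring_hom_cring (mps (rays ?F')) ?Q (cls ?F')" by (rule face_facts(3)[OF ff(2)])
  interpret hP: ring_hom_cring "mps (rays Fan)" ?P "cls Fan" by (rule hP)
  interpret hQ: ring_hom_cring "mps (rays ?F')" ?Q "cls ?F'" by (rule hQ)
  have r1P: "(mvar r1 :: (('d \<Rightarrow> int) \<Rightarrow> nat) \<Rightarrow> 'r) \<in> carrier (mps (rays Fan))" by (rule mvar_closed[OF ff(3)])
  have r2P: "(mvar r2 :: (('d \<Rightarrow> int) \<Rightarrow> nat) \<Rightarrow> 'r) \<in> carrier (mps (rays Fan))" by (rule mvar_closed[OF ff(4)])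
  have r1Q: "(mvar r1 :: (('d \<Rightarrow> int) \<Rightarrow> nat) \<Rightarrow> 'r) \<in> carrier (mps (rays ?F'))" by (rule mvar_closed) (use ff(3,5) in blast)
  have r2Q: "(mvar r2 :: (('d \<Rightarrow> int) \<Rightarrow> nat) \<Rightarrow> 'r) \<in> carrier (mps (rays ?F'))" by (rule mvar_closed) (use ff(4,5) in blast)
  have eQ: "(mvar (r1 + r2) :: (('d \<Rightarrow> int) \<Rightarrow> nat) \<Rightarrow> 'r) \<in> carrier (mps (rays ?F'))" by (rule mvar_closed[OF ff(6)])
  have cP: "(mps_const v :: (('d \<Rightarrow> int) \<Rightarrow> nat) \<Rightarrow> 'r) \<in> carrier (mps (rays Fan))" by (rule const_closed)
  define X1 where "X1 = cls Fan (mvar r1 :: (('d \<Rightarrow> int) \<Rightarrow> nat) \<Rightarrow> 'r)"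
  define X2 where "X2 = cls Fan (mvar r2 :: (('d \<Rightarrow> int) \<Rightarrow> nat) \<Rightarrow> 'r)"
  define c where "c = cls Fan (mps_const v :: (('d \<Rightarrow> int) \<Rightarrow> nat) \<Rightarrow> 'r)"
  define A where "A = cls ?F' (mvar r1 :: (('d \<Rightarrow> int) \<Rightarrow> nat) \<Rightarrow> 'r)"
  define B where "B = cls ?F' (mvar r2 :: (('d \<Rightarrow> int) \<Rightarrow> nat) \<Rightarrow> 'r)"
  define E where "E = cls ?F' (mvar (r1 + r2) :: (('d \<Rightarrow> int) \<Rightarrow> nat) \<Rightarrow> 'r)"
  have X1c: "X1 \<in> carrier ?P" and X2c: "X2 \<in> carrier ?P" and cc: "c \<in> carrier ?P"
    unfolding X1_def X2_def c_def using r1P r2P cP by auto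
  have Ac: "A \<in> carrier ?Q" and Bc: "B \<in> carrier ?Q" and Ec: "E \<in> carrier ?Q"
    unfolding A_def B_def E_def using r1Q r2Q eQ by auto
  have pbc: "pb c = cls ?F' (mps_const v)" unfolding c_def using pb_alg by blast
  have pfA: "pf A = X1" unfolding A_def X1_def using pf_var ff(3) by blast
  have pfB: "pf B = X2" unfolding B_def X2_def using pf_var ff(4) by blast
  have pb1: "pb X1 = A \<oplus>\<^bsub>?Q\<^esub> E \<ominus>\<^bsub>?Q\<^esub> pb c \<otimes>\<^bsub>?Q\<^esub> (A \<otimes>\<^bsub>?Q\<^esub> E)"
    unfolding X1_def A_def E_def pbc using pb_in fgl_conv[OF hQ r1Q eQ, of v] by simp
  have pb2: "pb X2 = B \<oplus>\<^bsub>?Q\<^esub> E \<ominus>\<^bsub>?Q\<^esub> pb c \<otimes>\<^bsub>?Q\<^esub> (B \<otimes>\<^bsub>?Q\<^esub> E)"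
    unfolding X2_def B_def E_def pbc using pb_in fgl_conv[OF hQ r2Q eQ, of v] by simp
  have AB: "A \<otimes>\<^bsub>?Q\<^esub> B = \<zero>\<^bsub>?Q\<^esub>"
  proof -
    have "A \<otimes>\<^bsub>?Q\<^esub> B = cls ?F' (mvar r1 \<otimes>\<^bsub>mps (rays ?F')\<^esub> mvar r2)"
      unfolding A_def B_def using r1Q r2Q by simp
    also have "\<dots> = cls ?F' (sqfree_mon {r1, r2})"
      unfolding mps_simps using mvar_mult_mvar ff(3,4,5) sigma(2) by (metis subsetD)
    also have "\<dots> = \<zero>\<^bsub>?Q\<^esub>" by (rule face_facts(4)[OF ff(2)]) (use ff in auto)
    finally show ?thesis .
  qed
  have pfadd: "\<And>a b. a \<in> carrier ?Q \<Longrightarrow> b \<in> carrier ?Q \<Longrightarrow> pf (a \<oplus>\<^bsub>?Q\<^esub> b) = pf a \<oplus>\<^bsub>?P\<^esub> pf b"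
    using pf_add by blast
  have pflin: "\<And>a b. a \<in> carrier ?P \<Longrightarrow> b \<in> carrier ?Q \<Longrightarrow> pf (pb a \<otimes>\<^bsub>?Q\<^esub> b) = a \<otimes>\<^bsub>?P\<^esub> pf b"
    using pf_lin by blast
  note abs1 = abstract_pf[of ?P ?Q pb pf X1 X2 c A B E, OF hP.S.is_cring hQ.S.is_cring pb_hom pf_fun pf_add pf_lin pf_one X1c X2c cc Ac Bc Ec pfA pfB pb1 pb2 AB]
  have BA: "B \<otimes>\<^bsub>?Q\<^esub> A = \<zero>\<^bsub>?Q\<^esub>" using AB Ac Bc hQ.S.m_comm by metis
  note abs2 = abstract_pf[of ?P ?Q pb pf X2 X1 c B A E, OF hP.S.is_cring hQ.S.is_cring pb_hom pf_fun pf_add pf_lin pf_one X2c X1c cc Bc Ac Ec pfB pfA pb2 pb1 BA]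
  have pfc: "\<And>x. x \<in> carrier ?Q \<Longrightarrow> pf x \<in> carrier ?P" using pf_fun by blast
  have G1: "pf (cls ?F' (mvar (r1 + r2))) = cls Fan (mps_smult v (mps_mult (mvar r1) (mvar r2)))"
  proof -
    have "cls Fan (mps_smult v (mps_mult (mvar r1) (mvar r2))) = c \<otimes>\<^bsub>?P\<^esub> (X1 \<otimes>\<^bsub>?P\<^esub> X2)"
    proof -
      have m: "mvar r1 \<otimes>\<^bsub>mps (rays Fan)\<^esub> (mvar r2 :: (('d \<Rightarrow> int) \<Rightarrow> nat) \<Rightarrow> 'r) \<in> carrier (mps (rays Fan))" by (rule hP.R.m_closed[OF r1P r2P])
      have e: "mps_mult (mvar r1) (mvar r2) = mvar r1 \<otimes>\<^bsub>mps (rays Fan)\<^esub> (mvar r2 :: (('d \<Rightarrow> int) \<Rightarrow> nat) \<Rightarrow> 'r)"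
        by (simp add: mps_simps)
      show ?thesis unfolding e unfolding c_def X1_def X2_def smult_mps[OF m] using r1P r2P cP m by simp
    qed
    then show ?thesis using abs1(1) E_def by simp
  qed
  have G2: "pf (cls ?F' (mps_pow (mvar (r1 + r2)) n)) =
            cls Fan (mps_smult v (\<Sum>i=1..n. mps_mult (mps_pow (mvar r1) (n + 1 - i)) (mps_pow (mvar r2) i))
                     - (\<Sum>i=1..n-1. mps_mult (mps_pow (mvar r1) (n - i)) (mps_pow (mvar r2) i)))"
    if n2: "n \<ge> 2" for n :: nat
  proof -
    obtain m where m: "n = Suc m" using n2 by (cases n) auto
    define p where "p k = pf (E [^]\<^bsub>?Q\<^esub> (k::nat))" for k
    have pc: "p k \<in> carrier ?P" for k unfolding p_def using Ec by (intro pfc) simp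
    have p0: "p 0 = \<one>\<^bsub>?P\<^esub>" unfolding p_def using pf_one by simp
    have p1: "p 1 = c \<otimes>\<^bsub>?P\<^esub> (X1 \<otimes>\<^bsub>?P\<^esub> X2)" unfolding p_def using abs1(1) Ec by simp
    have prec: "p (Suc (Suc k)) = (X1 \<oplus>\<^bsub>?P\<^esub> X2) \<otimes>\<^bsub>?P\<^esub> p (Suc k) \<ominus>\<^bsub>?P\<^esub> (X1 \<otimes>\<^bsub>?P\<^esub> X2) \<otimes>\<^bsub>?P\<^esub> p k" for k
      unfolding p_def by (rule abs1(2))
    note cf = closed_form[OF hP.S.is_cring X1c X2c cc p0 p1 prec pc, of m]
    let ?S1 = "\<Sum>i=1..n. mps_mult (mps_pow (mvar r1) (n + 1 - i)) (mps_pow (mvar r2) i) :: (('d \<Rightarrow> int) \<Rightarrow> nat) \<Rightarrow> 'r"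
    let ?S2 = "\<Sum>i=1..n-1. mps_mult (mps_pow (mvar r1) (n - i)) (mps_pow (mvar r2) i) :: (('d \<Rightarrow> int) \<Rightarrow> nat) \<Rightarrow> 'r"
    have sc: "(\<Sum>i\<in>I. mps_mult (mps_pow (mvar r1) (k i)) (mps_pow (mvar r2) (l i)) :: (('d \<Rightarrow> int) \<Rightarrow> nat) \<Rightarrow> 'r) \<in> carrier (mps (rays Fan))"
      for I k l
    proof -
      have fc: "(\<lambda>i. mps_mult (mps_pow (mvar r1) (k i)) (mps_pow (mvar r2) (l i)) :: (('d \<Rightarrow> int) \<Rightarrow> nat) \<Rightarrow> 'r) \<in> I \<rightarrow> carrier (mps (rays Fan))"
        using r1P r2P by (auto simp: pow_mps intro!: mult_closed hP.R.nat_pow_closed)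
      show ?thesis unfolding sum_mps[OF fc] using fc by (rule hP.R.finsum_closed)
    qed
    have c1: "?S1 \<in> carrier (mps (rays Fan))" by (rule sc)
    have c2: "?S2 \<in> carrier (mps (rays Fan))" by (rule sc)
    have c3: "mps_smult v ?S1 \<in> carrier (mps (rays Fan))" using mult_closed[OF cP c1] const_mult_mps[OF c1] by simp
    have "cls Fan (mps_smult v ?S1 - ?S2) = c \<otimes>\<^bsub>?P\<^esub> cls Fan ?S1 \<ominus>\<^bsub>?P\<^esub> cls Fan ?S2"
      unfolding minus_mps[OF c3 c2] unfolding smult_mps[OF c1] c_def using c1 c2 cP
      by (simp add: hP.hom_minus' hP.R.m_closed)
    also have "cls Fan ?S1 = (\<Oplus>\<^bsub>?P\<^esub>i\<in>{1..n}. X1 [^]\<^bsub>?P\<^esub> (n + 1 - i) \<otimes>\<^bsub>?P\<^esub> X2 [^]\<^bsub>?P\<^esub> i)"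
      unfolding X1_def X2_def by (rule sum_conv[OF hP r1P r2P])
    also have "cls Fan ?S2 = (\<Oplus>\<^bsub>?P\<^esub>i\<in>{1..n-1}. X1 [^]\<^bsub>?P\<^esub> (n - i) \<otimes>\<^bsub>?P\<^esub> X2 [^]\<^bsub>?P\<^esub> i)"
      unfolding X1_def X2_def by (rule sum_conv[OF hP r1P r2P])
    finally have rhs: "cls Fan (mps_smult v ?S1 - ?S2) = c \<otimes>\<^bsub>?P\<^esub> (\<Oplus>\<^bsub>?P\<^esub>i\<in>{1..n}. X1 [^]\<^bsub>?P\<^esub> (n + 1 - i) \<otimes>\<^bsub>?P\<^esub> X2 [^]\<^bsub>?P\<^esub> i)
        \<ominus>\<^bsub>?P\<^esub> (\<Oplus>\<^bsub>?P\<^esub>i\<in>{1..n-1}. X1 [^]\<^bsub>?P\<^esub> (n - i) \<otimes>\<^bsub>?P\<^esub> X2 [^]\<^bsub>?P\<^esub> i)" .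
    have lhs: "pf (cls ?F' (mps_pow (mvar (r1 + r2)) n)) = p n"
      unfolding p_def E_def using eQ by (simp add: pow_mps hQ.hom_pow')
    show ?thesis unfolding lhs rhs using cf by (simp add: m)
  qed
  have G3: "pf (cls ?F' (mps_mult (mps_pow (mvar a) s) (mps_pow (mvar (r1 + r2)) t))) =
            cls Fan (mps_mult (mvar a) (mps_mult (mps_pow (mvar b) t) (mps_pow (fgl_sub_var v a b) (s - 1))))"
    if ab: "{a, b} = {r1, r2}" "a \<noteq> b" and s: "s \<ge> 1" for a b and s t :: nat
  proof -
    have cases: "(a = r1 \<and> b = r2) \<or> (a = r2 \<and> b = r1)" using ab by (metis doubleton_eq_iff)
    have aP: "a \<in> rays Fan" "b \<in> rays Fan" using cases ff(3,4) by auto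
    have aQ: "(mvar a :: (('d \<Rightarrow> int) \<Rightarrow> nat) \<Rightarrow> 'r) \<in> carrier (mps (rays ?F'))" by (rule mvar_closed) (use aP ff(5) in blast)
    have aPc: "(mvar a :: (('d \<Rightarrow> int) \<Rightarrow> nat) \<Rightarrow> 'r) \<in> carrier (mps (rays Fan))" by (rule mvar_closed[OF aP(1)])
    have bPc: "(mvar b :: (('d \<Rightarrow> int) \<Rightarrow> nat) \<Rightarrow> 'r) \<in> carrier (mps (rays Fan))" by (rule mvar_closed[OF aP(2)])
    note DF = D_facts[OF hP aP, of v]
    have dPc: "(fgl_sub_var v a b :: (('d \<Rightarrow> int) \<Rightarrow> nat) \<Rightarrow> 'r) \<in> carrier (mps (rays Fan))"
      unfolding fgl_sub_var_def by (rule fgl_add_closed[OF aPc inv_closed[OF aP(2)]])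
    have lhs: "cls ?F' (mps_mult (mps_pow (mvar a) s) (mps_pow (mvar (r1 + r2)) t)) =
        cls ?F' (mvar a) [^]\<^bsub>?Q\<^esub> s \<otimes>\<^bsub>?Q\<^esub> E [^]\<^bsub>?Q\<^esub> t"
      unfolding E_def using aQ eQ by (simp add: pow_mps hQ.hom_pow' mult_eq[of "rays ?F'"])
    have rhs: "cls Fan (mps_mult (mvar a) (mps_mult (mps_pow (mvar b) t) (mps_pow (fgl_sub_var v a b) (s - 1)))) =
        cls Fan (mvar a) \<otimes>\<^bsub>?P\<^esub> (cls Fan (mvar b) [^]\<^bsub>?P\<^esub> t \<otimes>\<^bsub>?P\<^esub> cls Fan (fgl_sub_var v a b) [^]\<^bsub>?P\<^esub> (s - 1))"
      using aPc bPc dPc by (simp add: pow_mps hP.hom_pow' mult_eq[of "rays Fan"])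
    show ?thesis unfolding lhs rhs
    proof (cases "a = r1 \<and> b = r2")
      case True
      then show "pf (cls ?F' (mvar a) [^]\<^bsub>?Q\<^esub> s \<otimes>\<^bsub>?Q\<^esub> E [^]\<^bsub>?Q\<^esub> t) =
          cls Fan (mvar a) \<otimes>\<^bsub>?P\<^esub> (cls Fan (mvar b) [^]\<^bsub>?P\<^esub> t \<otimes>\<^bsub>?P\<^esub> cls Fan (fgl_sub_var v a b) [^]\<^bsub>?P\<^esub> (s - 1))"
        using abs1(3)[OF DF(1) DF(4) _ _ s] DF(2,3) unfolding A_def X1_def X2_def c_def by simp
    next
      case False
      then have T: "a = r2 \<and> b = r1" using cases by blast
      then show "pf (cls ?F' (mvar a) [^]\<^bsub>?Q\<^esub> s \<otimes>\<^bsub>?Q\<^esub> E [^]\<^bsub>?Q\<^esub> t) =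
          cls Fan (mvar a) \<otimes>\<^bsub>?P\<^esub> (cls Fan (mvar b) [^]\<^bsub>?P\<^esub> t \<otimes>\<^bsub>?P\<^esub> cls Fan (fgl_sub_var v a b) [^]\<^bsub>?P\<^esub> (s - 1))"
        using abs2(3)[OF DF(1) DF(4) _ _ s] DF(2,3) unfolding B_def X1_def X2_def c_def by simp
    qed
  qed
  show ?thesis using G1 G2 G3 by blast
qed

end
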